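(* Let $W\ge 1$, $K=\lfloor (W-1)/p\rfloor$, let $\mu_c>0,l_c>0$ be such that $C$ is $\mu_c$-strongly convex and $l_c$-smooth, and $\zeta=l_c/\mu_c$. Let $\varphi$ be any initialization oracle and $\mathbf z(0)$ the vector it produces. Take stepsizes $\gamma_g=1/l_c$, $\phi=1-1/\sqrt\zeta$, $\gamma_c=(1+\phi)/l_c$, $\gamma_\omega=\phi^2/(2-\phi)$, $\gamma_y=\phi^2/((1+\phi)(2-\phi))$, $\gamma_z=\phi^2/(1-\phi^2)$. Then $$\mathrm{Regret}(\mathrm{RHGD})\le \zeta\Big(\frac{\zeta-1}{\zeta}\Big)^{K}\mathrm{Regret}(\varphi),\qquad \mathrm{Regret}(\mathrm{RHTM})\le \zeta^2\Big(\frac{\sqrt\zeta-1}{\sqrt\zeta}\Big)^{2K}\mathrm{Regret}(\varphi).$$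
   Context: Setting: $(A,B)$ in canonical form (indices $0=k_0<k_1<\dots<k_m=n$, $\mathcal I=\{k_1,\dots,k_m\}$; rows $i\notin\mathcal I$ of $A$ equal $e_{i+1}^\top$, rows in $\mathcal I$ arbitrary; $j$-th column of $B$ is $e_{k_j}$; $p_i=k_i-k_{i-1}$, controllability index $p=\max_ip_i$; $A(\mathcal I,:)$ = rows $k_1,\dots,k_m$ of $A$). Dynamics $x_{t+1}=Ax_t+Bu_t$, $x_0=0$, cost $J(\mathbf x,\mathbf u)=\sum_{t=0}^{N-1}[f_t(x_t)+g_t(u_t)]+f_N(x_N)$ with $f_t$ $\mu_f$-strongly convex and $l_f$-smooth, $g_t$ convex and $l_g$-smooth. For $\mathbf z=(z_1,\dots,z_N)\in\mathbb R^{mN}$ ($z_t=0$ for $t\le0$): $x_t(\mathbf z)=(z^1_{t-p_1+1},\dots,z^1_t,\dots,z^m_{t-p_m+1},\dots,z^m_t)^\top$, $u_t(\mathbf z)=z_{t+1}-A(\mathcal I,:)x_t(\mathbf z)$, $C(\mathbf z)=\sum_{t=0}^Nf_t(x_t(\mathbf z))+\sum_{t=0}^{N-1}g_t(u_t(\mathbf z))$; $C(\mathbf z)=J(\mathbf x(\mathbf z),\mathbf u(\mathbf z))$ and $\min C=J^*:=\min\{J(\mathbf x,\mathbf u): x_{t+1}=Ax_t+Bu_t,\ x_0=0\}$. Prediction model: at time $t$ the controller knows the current and past states and $f_s,g_s$ for $s\le t+W-1$. An initialization oracle $\varphi$ produces $\mathbf z(0)\in\mathbb R^{mN}$ with $z_{s}(0)$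 depending only on $\{f_r,g_r\}_{r\le s-1}$; $\mathrm{Regret}(\varphi):=J(\mathbf x(\mathbf z(0)),\mathbf u(\mathbf z(0)))-J^*$ (the controller $u_t=z_{t+1}(0)-A(\mathcal I,:)x_t$). For an algorithm, $\mathrm{Regret}=J(\text{its trajectory})-J^*$. RHGD (receding horizon gradient descent) is the online algorithm that, using only the $W$-step lookahead (exploiting that $\partial C/\partial z_t$ depends only on $z_{t-p},\dots,z_{t+p}$ and $f_s,g_s$ for $t-1\le s\le t+p-1$), applies $u_t=z_{t+1}(K)-A(\mathcal I,:)x_t$ where $\mathbf z(j+1)=\mathbf z(j)-\gamma_g\nabla C(\mathbf z(j))$, $j=0,\dots,K-1$, starting from the oracle's $\mathbf z(0)$; its resulting trajectory is $(\mathbf x(\mathbf z(K)),\mathbf u(\mathbf z(K)))$. RHTM (receding horizon triple momentum) is the same with the gradient step replaced by triple momentum: $\boldsymbol\omega(-1)=\boldsymbol\omega(0)=\mathbf y(0)=\mathbf z(0)$ and, for $j\ge0$, $\boldsymbol\omega(j+1)=(1+\gamma_\omega)\boldsymbol\omega(j)-\gamma_\omega\boldsymbol\omega(j-1)-\gamma_c\nabla C(\mathbf y(j))$, $\mathbf y(j+1)=(1+\gamma_y)\boldsymbol\omega(j+1)-\gamma_y\boldsymbol\omega(j)$, $\mathbf z(j+1)=(1+\gamma_z)\boldsymbol\omega(j+1)-\gamma_z\boldsymbol\omega(j)$; it applies $u_t=z_{t+1}(K)-A(\mathcal I,:)x_t$, giving trajectory $(\mathbf x(\mathbf z(K)),\mathbf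 u(\mathbf z(K)))$. *)

theory Defs
  imports "HOL-Analysis.Analysis"
begin

text \<open>Vectors of R^d are represented as functions nat => real with coordinates
  1..d; all other coordinates are zero.  The topology on nat => real is the
  product topology, which on the finite-dimensional subspace vsp d is the
  Euclidean topology.\<close>

definition vsp :: "nat \<Rightarrow> (nat \<Rightarrow> real) set" where
  "vsp d = {x. \<forall>i. i \<notin> {1..d} \<longrightarrow> x i = 0}"

definition ip :: "nat \<Rightarrow> (nat \<Rightarrow> real) \<Rightarrow> (nat \<Rightarrow> real) \<Rightarrow> real" where
  "ip d x y = (\<Sum>i=1..d. x i * y i)"

definition nrm :: "nat \<Rightarrow> (nat \<Rightarrow> real) \<Rightarrow> real" where
  "nrm d x = sqrt (ip d x x)"

definition has_grad :: "nat \<Rightarrow> ((nat \<Rightarrow> real) \<Rightarrow> real) \<Rightarrow> (nat \<Rightarrow> real) \<Rightarrow> (nat \<Rightarrow> real) \<Rightarrow> bool" where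
  "has_grad d F g x \<longleftrightarrow> g \<in> vsp d \<and>
     ((\<lambda>y. (F y - F x - ip d g (\<lambda>i. y i - x i)) / nrm d (\<lambda>i. y i - x i)) \<longlongrightarrow> 0)
       (at x within vsp d)"

definition grad :: "nat \<Rightarrow> ((nat \<Rightarrow> real) \<Rightarrow> real) \<Rightarrow> (nat \<Rightarrow> real) \<Rightarrow> (nat \<Rightarrow> real)" where
  "grad d F x = (SOME g. has_grad d F g x)"

definition smooth_on :: "nat \<Rightarrow> real \<Rightarrow> ((nat \<Rightarrow> real) \<Rightarrow> real) \<Rightarrow> bool" where
  "smooth_on d l F \<longleftrightarrow> (\<forall>x\<in>vsp d. \<exists>g. has_grad d F g x) \<and>
     (\<forall>x\<in>vsp d. \<forall>y\<in>vsp d.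
        nrm d (\<lambda>i. grad d F x i - grad d F y i) \<le> l * nrm d (\<lambda>i. x i - y i))"

definition strongly_convex_on :: "nat \<Rightarrow> real \<Rightarrow> ((nat \<Rightarrow> real) \<Rightarrow> real) \<Rightarrow> bool" where
  "strongly_convex_on d \<mu> F \<longleftrightarrow> (\<forall>x\<in>vsp d. \<forall>y\<in>vsp d. \<forall>\<theta>\<in>{0..1::real}.
     F (\<lambda>i. \<theta> * x i + (1 - \<theta>) * y i)
       \<le> \<theta> * F x + (1 - \<theta>) * F y - \<mu> / 2 * \<theta> * (1 - \<theta>) * (nrm d (\<lambda>i. x i - y i))\<^sup>2)"

definition canonical_form ::
  "nat \<Rightarrow> nat \<Rightarrow> (nat \<Rightarrow> nat) \<Rightarrow> (nat \<Rightarrow> nat \<Rightarrow> real) \<Rightarrow> (nat \<Rightarrow> nat \<Rightarrow> real) \<Rightarrow> bool" where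
  "canonical_form n m k A B \<longleftrightarrow> 1 \<le> m \<and> k 0 = 0 \<and> k m = n \<and> (\<forall>j<m. k j < k (Suc j)) \<and>
     (\<forall>i\<in>{1..n}. i \<notin> k ` {1..m} \<longrightarrow> (\<forall>l\<in>{1..n}. A i l = (if l = i + 1 then 1 else 0))) \<and>
     (\<forall>i\<in>{1..n}. \<forall>j\<in>{1..m}. B i j = (if i = k j then 1 else 0))"

definition ctrl_index :: "nat \<Rightarrow> (nat \<Rightarrow> nat) \<Rightarrow> nat" where
  "ctrl_index m k = Max ((\<lambda>j. k j - k (j - 1)) ` {1..m})"

text \<open>z = (z_1,...,z_N) in R^(mN) is stored flat: z_s^j is coordinate (s-1)*m + j;
  z_s = 0 for s <= 0.\<close>
definition zc :: "nat \<Rightarrow> (nat \<Rightarrow> real) \<Rightarrow> int \<Rightarrow> nat \<Rightarrow> real" where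
  "zc m Z s j = (if 1 \<le> s then Z ((nat s - 1) * m + j) else 0)"

definition blk :: "(nat \<Rightarrow> nat) \<Rightarrow> nat \<Rightarrow> nat" where
  "blk k i = (LEAST j. i \<le> k j)"

text \<open>x_t(z): coordinate k_(j-1)+r (1 <= r <= p_j) equals z^j_(t-p_j+r) = z^j_(t - k_j + i).\<close>
definition xz :: "nat \<Rightarrow> nat \<Rightarrow> (nat \<Rightarrow> nat) \<Rightarrow> (nat \<Rightarrow> real) \<Rightarrow> nat \<Rightarrow> (nat \<Rightarrow> real)" where
  "xz n m k Z t = (\<lambda>i. if i \<in> {1..n}
       then zc m Z (int t - int (k (blk k i)) + int i) (blk k i) else 0)"

definition uz :: "nat \<Rightarrow> nat \<Rightarrow> (nat \<Rightarrow> nat) \<Rightarrow> (nat \<Rightarrow> nat \<Rightarrow> real) \<Rightarrow> (nat \<Rightarrow> real) \<Rightarrow> nat \<Rightarrow> (nat \<Rightarrow> real)" where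
  "uz n m k A Z t = (\<lambda>j. if j \<in> {1..m}
       then zc m Z (int t + 1) j - (\<Sum>l=1..n. A (k j) l * xz n m k Z t l) else 0)"

definition Ccost :: "nat \<Rightarrow> nat \<Rightarrow> nat \<Rightarrow> (nat \<Rightarrow> nat) \<Rightarrow> (nat \<Rightarrow> nat \<Rightarrow> real)
    \<Rightarrow> (nat \<Rightarrow> (nat \<Rightarrow> real) \<Rightarrow> real) \<Rightarrow> (nat \<Rightarrow> (nat \<Rightarrow> real) \<Rightarrow> real) \<Rightarrow> (nat \<Rightarrow> real) \<Rightarrow> real" where
  "Ccost n m N k A f g Z = (\<Sum>t=0..N. f t (xz n m k Z t)) + (\<Sum>t<N. g t (uz n m k A Z t))"

definition Jcost :: "nat \<Rightarrow> (nat \<Rightarrow> (nat \<Rightarrow> real) \<Rightarrow> real) \<Rightarrow> (nat \<Rightarrow> (nat \<Rightarrow> real) \<Rightarrow> real)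
    \<Rightarrow> (nat \<Rightarrow> nat \<Rightarrow> real) \<Rightarrow> (nat \<Rightarrow> nat \<Rightarrow> real) \<Rightarrow> real" where
  "Jcost N f g x u = (\<Sum>t<N. f t (x t) + g t (u t)) + f N (x N)"

definition feasible :: "nat \<Rightarrow> nat \<Rightarrow> nat \<Rightarrow> (nat \<Rightarrow> nat \<Rightarrow> real) \<Rightarrow> (nat \<Rightarrow> nat \<Rightarrow> real)
    \<Rightarrow> (nat \<Rightarrow> nat \<Rightarrow> real) \<Rightarrow> (nat \<Rightarrow> nat \<Rightarrow> real) \<Rightarrow> bool" where
  "feasible n m N A B x u \<longleftrightarrow> x 0 = (\<lambda>_. 0) \<and> (\<forall>t\<le>N. x t \<in> vsp n) \<and> (\<forall>t<N. u t \<in> vsp m) \<and>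
     (\<forall>t<N. \<forall>i\<in>{1..n}. x (Suc t) i = (\<Sum>l=1..n. A i l * x t l) + (\<Sum>j=1..m. B i j * u t j))"

definition Jstar :: "nat \<Rightarrow> nat \<Rightarrow> nat \<Rightarrow> (nat \<Rightarrow> nat \<Rightarrow> real) \<Rightarrow> (nat \<Rightarrow> nat \<Rightarrow> real)
    \<Rightarrow> (nat \<Rightarrow> (nat \<Rightarrow> real) \<Rightarrow> real) \<Rightarrow> (nat \<Rightarrow> (nat \<Rightarrow> real) \<Rightarrow> real) \<Rightarrow> real" where
  "Jstar n m N A B f g = Inf {Jcost N f g x u | x u. feasible n m N A B x u}"

definition regret_z :: "nat \<Rightarrow> nat \<Rightarrow> nat \<Rightarrow> (nat \<Rightarrow> nat) \<Rightarrow> (nat \<Rightarrow> nat \<Rightarrow> real) \<Rightarrow> (nat \<Rightarrow> nat \<Rightarrow> real)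
    \<Rightarrow> (nat \<Rightarrow> (nat \<Rightarrow> real) \<Rightarrow> real) \<Rightarrow> (nat \<Rightarrow> (nat \<Rightarrow> real) \<Rightarrow> real) \<Rightarrow> (nat \<Rightarrow> real) \<Rightarrow> real" where
  "regret_z n m N k A B f g Z = Jcost N f g (xz n m k Z) (uz n m k A Z) - Jstar n m N A B f g"

definition gd_iter :: "nat \<Rightarrow> ((nat \<Rightarrow> real) \<Rightarrow> real) \<Rightarrow> real \<Rightarrow> (nat \<Rightarrow> real) \<Rightarrow> nat \<Rightarrow> (nat \<Rightarrow> real)" where
  "gd_iter d F \<gamma> z0 j = ((\<lambda>z i. z i - \<gamma> * grad d F z i) ^^ j) z0"

text \<open>Triple momentum state (omega(j), omega(j-1), y(j)).\<close>
primrec tm_st :: "nat \<Rightarrow> ((nat \<Rightarrow> real) \<Rightarrow> real) \<Rightarrow> real \<Rightarrow> real \<Rightarrow> real \<Rightarrow> (nat \<Rightarrow> real) \<Rightarrow> nat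
    \<Rightarrow> (nat \<Rightarrow> real) \<times> (nat \<Rightarrow> real) \<times> (nat \<Rightarrow> real)" where
  "tm_st d F gc gw gy z0 0 = (z0, z0, z0)"
| "tm_st d F gc gw gy z0 (Suc j) = (case tm_st d F gc gw gy z0 j of (w, wp, y) \<Rightarrow>
     let wn = (\<lambda>i. (1 + gw) * w i - gw * wp i - gc * grad d F y i)
     in (wn, w, (\<lambda>i. (1 + gy) * wn i - gy * w i)))"

definition tm_z :: "nat \<Rightarrow> ((nat \<Rightarrow> real) \<Rightarrow> real) \<Rightarrow> real \<Rightarrow> real \<Rightarrow> real \<Rightarrow> real \<Rightarrow> (nat \<Rightarrow> real) \<Rightarrow> nat
    \<Rightarrow> (nat \<Rightarrow> real)" where
  "tm_z d F gc gw gy gz z0 j = (case tm_st d F gc gw gy z0 j of (w, wp, _) \<Rightarrow>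
     (\<lambda>i. (1 + gz) * w i - gz * wp i))"

end

theory Submission
  imports Defs
begin
lemma ip_comm: "ip d x y = ip d y x" unfolding ip_def by (simp add: mult.commute)
lemma ip_add_left: "ip d (\<lambda>i. x i + y i) z = ip d x z + ip d y z"
  unfolding ip_def by (simp add: distrib_right sum.distrib)
lemma ip_diff_left: "ip d (\<lambda>i. x i - y i) z = ip d x z - ip d y z"
  unfolding ip_def by (simp add: left_diff_distrib sum_subtractf)
lemma ip_scale_left: "ip d (\<lambda>i. c * x i) z = c * ip d x z"
  unfolding ip_def by (simp add: sum_distrib_left mult.assoc)
lemma ip_add_right: "ip d z (\<lambda>i. x i + y i) = ip d z x + ip d z y"
  unfolding ip_def by (simp add: distrib_left sum.distrib)
lemma ip_diff_right: "ip d z (\<lambda>i. x i - y i) = ip d z x - ip d z y"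
  unfolding ip_def by (simp add: right_diff_distrib sum_subtractf)
lemma ip_scale_right: "ip d z (\<lambda>i. c * x i) = c * ip d z x"
  unfolding ip_def by (simp add: sum_distrib_left mult.left_commute)
lemma ip_neg_left: "ip d (\<lambda>i. - x i) z = - ip d x z"
  unfolding ip_def by (simp add: sum_negf)
lemma ip_neg_right: "ip d z (\<lambda>i. - x i) = - ip d z x"
  unfolding ip_def by (simp add: sum_negf)
lemma ip_zero_left[simp]: "ip d (\<lambda>i. 0) z = 0" unfolding ip_def by simp
lemma ip_zero_right[simp]: "ip d z (\<lambda>i. 0) = 0" unfolding ip_def by simp
lemma ip_eta_left: "ip d (\<lambda>i. x i) z = ip d x z" by simp

lemmas ip_lin = ip_add_left ip_diff_left ip_scale_left ip_add_right ip_diff_right ip_scale_right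
  ip_neg_left ip_neg_right

lemma ip_self_nonneg: "0 \<le> ip d x x" unfolding ip_def by (rule sum_nonneg) simp
lemma nrm_nonneg: "0 \<le> nrm d x" unfolding nrm_def using ip_self_nonneg by simp
lemma nrm_sq: "(nrm d x)\<^sup>2 = ip d x x" unfolding nrm_def using ip_self_nonneg by simp

lemma ip_cs: "ip d x y \<le> nrm d x * nrm d y"
proof -
  have "(ip d x y)\<^sup>2 \<le> ip d x x * ip d y y"
    unfolding ip_def using Cauchy_Schwarz_ineq_sum[of x y "{1..d}"] by (simp add: power2_eq_square)
  hence "\<bar>ip d x y\<bar> \<le> sqrt (ip d x x * ip d y y)"
    using real_le_rsqrt by (metis abs_le_square_iff real_sqrt_abs real_sqrt_le_iff)
  thus ?thesis unfolding nrm_def by (simp add: real_sqrt_mult)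
qed

lemma ip_zero_iff: "x \<in> vsp d \<Longrightarrow> ip d x x = 0 \<longleftrightarrow> x = (\<lambda>i. 0)"
proof
  assume x: "x \<in> vsp d" and h: "ip d x x = 0"
  have "\<forall>i\<in>{1..d}. x i * x i = 0"
    using h unfolding ip_def by (subst (asm) sum_nonneg_eq_0_iff) auto
  thus "x = (\<lambda>i. 0)" using x unfolding vsp_def by (auto intro!: ext)
qed (simp)

lemma vsp_lin[intro]:
  "x \<in> vsp d \<Longrightarrow> y \<in> vsp d \<Longrightarrow> (\<lambda>i. a * x i + b * y i) \<in> vsp d"
  "x \<in> vsp d \<Longrightarrow> y \<in> vsp d \<Longrightarrow> (\<lambda>i. x i - y i) \<in> vsp d"
  "x \<in> vsp d \<Longrightarrow> y \<in> vsp d \<Longrightarrow> (\<lambda>i. x i + y i) \<in> vsp d"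
  "x \<in> vsp d \<Longrightarrow> (\<lambda>i. a * x i) \<in> vsp d"
  unfolding vsp_def by auto

lemma nrm_scale: "nrm d (\<lambda>i. c * x i) = \<bar>c\<bar> * nrm d x"
  unfolding nrm_def ip_lin by (simp add: real_sqrt_mult mult.assoc[symmetric])

lemma vsp_ext: "x \<in> vsp d \<Longrightarrow> y \<in> vsp d \<Longrightarrow> (\<And>i. i \<in> {1..d} \<Longrightarrow> x i = y i) \<Longrightarrow> x = y"
  unfolding vsp_def by (rule ext) (metis (mono_tags, lifting) mem_Collect_eq)

lemma line_cont: fixes x v :: "nat \<Rightarrow> real" and t0 :: real
  shows "((\<lambda>t. (\<lambda>i. x i + t * v i)) \<longlongrightarrow> (\<lambda>i. x i + t0 * v i)) (at t0)"
proof -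
  have "continuous_on UNIV (\<lambda>t. (\<lambda>i. x i + t * v i))"
    by (rule continuous_on_coordinatewise_then_product) (intro continuous_intros)
  thus ?thesis by (simp add: continuous_on_def)
qed

lemma line_deriv:
  assumes G: "\<forall>z\<in>vsp d. has_grad d F (G z) z" and x: "x \<in> vsp d" and v: "v \<in> vsp d"
  shows "((\<lambda>t. F (\<lambda>i. x i + t * v i)) has_real_derivative ip d (G (\<lambda>i. x i + t0 * v i)) v) (at t0)"
proof (cases "v = (\<lambda>i. 0)")
  case True
  then show ?thesis by simp
next
  case False
  define p where "p = (\<lambda>i. x i + t0 * v i)"
  define \<gamma> where "\<gamma> = (\<lambda>t::real. (\<lambda>i. x i + t * v i))"
  define \<phi> where "\<phi> = (\<lambda>t. F (\<gamma> t))"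
  define c where "c = ip d (G p) v"
  have pv: "p \<in> vsp d" unfolding p_def using x v by auto
  have nvpos: "nrm d v > 0"
    using False ip_zero_iff[OF v] ip_self_nonneg[of d v] unfolding nrm_def by auto
  obtain j where j: "v j \<noteq> 0" using False by auto
  have hg: "((\<lambda>y. (F y - F p - ip d (G p) (\<lambda>i. y i - p i)) / nrm d (\<lambda>i. y i - p i)) \<longlongrightarrow> 0)
       (at p within vsp d)" using G pv unfolding has_grad_def by auto
  have fl: "filterlim \<gamma> (at p within vsp d) (at t0)"
    unfolding filterlim_at
  proof
    show "\<forall>\<^sub>F t in at t0. \<gamma> t \<in> vsp d \<and> \<gamma> t \<noteq> p"
      unfolding eventually_at_filter
    proof (rule always_eventually, intro allI impI)
      fix t assume "t \<noteq> t0"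
      hence "\<gamma> t j \<noteq> p j" using j unfolding \<gamma>_def p_def by auto
      thus "\<gamma> t \<in> vsp d \<and> \<gamma> t \<noteq> p" unfolding \<gamma>_def using x v by auto
    qed
    show "(\<gamma> \<longlongrightarrow> p) (at t0)" unfolding \<gamma>_def p_def by (rule line_cont)
  qed
  have comp: "((\<lambda>t. (\<phi> t - \<phi> t0 - (t - t0) * c) / (\<bar>t - t0\<bar> * nrm d v)) \<longlongrightarrow> 0) (at t0)"
  proof -
    have "((\<lambda>t. (F (\<gamma> t) - F p - ip d (G p) (\<lambda>i. \<gamma> t i - p i)) / nrm d (\<lambda>i. \<gamma> t i - p i)) \<longlongrightarrow> 0) (at t0)"
      using filterlim_compose[OF hg fl] by (simp add: o_def)
    moreover have "(F (\<gamma> t) - F p - ip d (G p) (\<lambda>i. \<gamma> t i - p i)) / nrm d (\<lambda>i. \<gamma> t i - p i)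
       = (\<phi> t - \<phi> t0 - (t - t0) * c) / (\<bar>t - t0\<bar> * nrm d v)" for t
    proof -
      have e: "(\<lambda>i. \<gamma> t i - p i) = (\<lambda>i. (t - t0) * v i)"
        unfolding \<gamma>_def p_def by (auto simp: algebra_simps)
      have e2: "\<gamma> t0 = p" unfolding \<gamma>_def p_def ..
      show ?thesis unfolding e ip_scale_right nrm_scale \<phi>_def c_def e2 by (simp add: mult.commute)
    qed
    ultimately show ?thesis by simp
  qed
  have "((\<lambda>t. (\<phi> t - \<phi> t0) / (t - t0) - c) \<longlongrightarrow> 0) (at t0)"
  proof -
    have A: "((\<lambda>t. \<bar>(\<phi> t - \<phi> t0 - (t - t0) * c) / (\<bar>t - t0\<bar> * nrm d v)\<bar> * nrm d v) \<longlongrightarrow> 0) (at t0)"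
      by (rule tendsto_mult_left_zero[OF tendsto_rabs_zero[OF comp]])
    moreover have ev: "\<forall>\<^sub>F t in at t0. \<bar>(\<phi> t - \<phi> t0 - (t - t0) * c) / (\<bar>t - t0\<bar> * nrm d v)\<bar> * nrm d v
        = \<bar>(\<phi> t - \<phi> t0) / (t - t0) - c\<bar>"
      unfolding eventually_at_filter
    proof (rule always_eventually, intro allI impI)
      fix t assume "t \<noteq> t0"
      hence "(\<phi> t - \<phi> t0) / (t - t0) - c = (\<phi> t - \<phi> t0 - (t - t0) * c) / (t - t0)"
        by (simp add: field_simps)
      thus "\<bar>(\<phi> t - \<phi> t0 - (t - t0) * c) / (\<bar>t - t0\<bar> * nrm d v)\<bar> * nrm d v
        = \<bar>(\<phi> t - \<phi> t0) / (t - t0) - c\<bar>"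
        using nvpos \<open>t \<noteq> t0\<close> by (simp add: abs_mult abs_divide)
    qed
    have "((\<lambda>t. \<bar>(\<phi> t - \<phi> t0) / (t - t0) - c\<bar>) \<longlongrightarrow> 0) (at t0)"
      using tendsto_cong[OF ev] A by blast
    thus ?thesis by (rule tendsto_rabs_zero_iff[THEN iffD1])
  qed
  hence "(\<phi> has_real_derivative c) (at t0)"
    unfolding has_field_derivative_iff LIM_zero_iff .
  thus ?thesis unfolding \<phi>_def \<gamma>_def c_def p_def .
qed

lemma grad_ex: "smooth_on d l F \<Longrightarrow> x \<in> vsp d \<Longrightarrow> has_grad d F (grad d F x) x"
  unfolding smooth_on_def grad_def by (metis someI_ex)

lemma grad_vsp: "smooth_on d l F \<Longrightarrow> x \<in> vsp d \<Longrightarrow> grad d F x \<in> vsp d"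
  using grad_ex unfolding has_grad_def by blast

lemma grad_all: "smooth_on d l F \<Longrightarrow> \<forall>z\<in>vsp d. has_grad d F (grad d F z) z"
  using grad_ex by blast

lemma sc_grad:
  assumes G: "\<forall>z\<in>vsp d. has_grad d F (G z) z" and sc: "strongly_convex_on d \<mu> F"
    and x: "x \<in> vsp d" and y: "y \<in> vsp d"
  shows "F x + ip d (G x) (\<lambda>i. y i - x i) + \<mu> / 2 * (nrm d (\<lambda>i. y i - x i))\<^sup>2 \<le> F y"
proof -
  define v where "v = (\<lambda>i. y i - x i)"
  have v: "v \<in> vsp d" unfolding v_def using x y by auto
  define \<phi> where "\<phi> = (\<lambda>t. F (\<lambda>i. x i + t * v i))"
  define nv where "nv = (nrm d v)\<^sup>2"
  have "(\<phi> has_real_derivative ip d (G (\<lambda>i. x i + 0 * v i)) v) (at 0)"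
    unfolding \<phi>_def by (rule line_deriv[OF G x v])
  hence D: "(\<phi> has_real_derivative ip d (G x) v) (at 0)" by simp
  have phi0: "\<phi> 0 = F x" unfolding \<phi>_def by simp
  have L1: "((\<lambda>t. (\<phi> t - \<phi> 0) / (t - 0)) \<longlongrightarrow> ip d (G x) v) (at_right 0)"
    using D unfolding has_field_derivative_iff by (rule tendsto_mono[OF at_le, rotated]) simp
  have L2: "((\<lambda>t. F y - F x - \<mu> / 2 * (1 - t) * nv) \<longlongrightarrow> F y - F x - \<mu> / 2 * (1 - 0) * nv) (at_right 0)"
    by (intro tendsto_intros)
  have ev: "\<forall>\<^sub>F t in at_right 0. (\<phi> t - \<phi> 0) / (t - 0) \<le> F y - F x - \<mu> / 2 * (1 - t) * nv"
    using eventually_at_right_real[of 0 1, OF zero_less_one]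
  proof (rule eventually_mono)
    fix t :: real assume t: "t \<in> {0<..<1}"
    have "F (\<lambda>i. t * y i + (1 - t) * x i) \<le> t * F y + (1 - t) * F x - \<mu> / 2 * t * (1 - t) * (nrm d (\<lambda>i. y i - x i))\<^sup>2"
      using sc y x t unfolding strongly_convex_on_def by auto
    moreover have "(\<lambda>i. t * y i + (1 - t) * x i) = (\<lambda>i. x i + t * v i)"
      unfolding v_def by (auto simp: algebra_simps)
    ultimately have "\<phi> t - \<phi> 0 \<le> t * (F y - F x - \<mu> / 2 * (1 - t) * nv)"
      unfolding \<phi>_def nv_def v_def by (simp add: algebra_simps)
    thus "(\<phi> t - \<phi> 0) / (t - 0) \<le> F y - F x - \<mu> / 2 * (1 - t) * nv"
      using t by (simp add: divide_le_eq mult.commute)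
  qed
  have "ip d (G x) v \<le> F y - F x - \<mu> / 2 * (1 - 0) * nv"
    by (rule tendsto_le[OF trivial_limit_at_right_real L2 L1 ev])
  thus ?thesis unfolding v_def nv_def by simp
qed

lemma descent:
  assumes sm: "smooth_on d L F" and x: "x \<in> vsp d" and y: "y \<in> vsp d" and L: "L \<ge> 0"
  shows "F y \<le> F x + ip d (grad d F x) (\<lambda>i. y i - x i) + L / 2 * (nrm d (\<lambda>i. y i - x i))\<^sup>2"
proof -
  define v where "v = (\<lambda>i. y i - x i)"
  have v: "v \<in> vsp d" unfolding v_def using x y by auto
  define c0 where "c0 = ip d (grad d F x) v"
  define nv where "nv = nrm d v"
  define \<psi> where "\<psi> = (\<lambda>t. F (\<lambda>i. x i + t * v i) - t * c0 - L / 2 * t ^ 2 * nv ^ 2)"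
  have G: "\<forall>z\<in>vsp d. has_grad d F (grad d F z) z" by (rule grad_all[OF sm])
  have "\<psi> 1 \<le> \<psi> 0"
  proof (rule DERIV_nonpos_imp_nonincreasing[of 0 1])
    fix t :: real assume t: "0 \<le> t" "t \<le> 1"
    define xt where "xt = (\<lambda>i. x i + t * v i)"
    have xt: "xt \<in> vsp d" unfolding xt_def using x v by auto
    have D: "(\<psi> has_real_derivative (ip d (grad d F xt) v - c0 - L / 2 * (2 * t) * nv ^ 2)) (at t)"
      unfolding \<psi>_def xt_def
      by (rule derivative_eq_intros line_deriv[OF G x v] | simp)+
    have "ip d (grad d F xt) v - c0 = ip d (\<lambda>i. grad d F xt i - grad d F x i) v"
      unfolding c0_def ip_diff_left ..
    also have "\<dots> \<le> nrm d (\<lambda>i. grad d F xt i - grad d F x i) * nv"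
      unfolding nv_def by (rule ip_cs)
    also have "\<dots> \<le> (L * nrm d (\<lambda>i. xt i - x i)) * nv"
      using sm xt x unfolding smooth_on_def
      by (intro mult_right_mono) (auto simp: nv_def nrm_nonneg)
    also have "nrm d (\<lambda>i. xt i - x i) = t * nv"
    proof -
      have "(\<lambda>i. xt i - x i) = (\<lambda>i. t * v i)" unfolding xt_def by auto
      thus ?thesis using t by (simp add: nrm_scale nv_def)
    qed
    finally have "ip d (grad d F xt) v - c0 - L / 2 * (2 * t) * nv ^ 2 \<le> 0"
      by (simp add: power2_eq_square algebra_simps)
    thus "\<exists>y. (\<psi> has_real_derivative y) (at t) \<and> y \<le> 0" using D by blast
  qed simp
  moreover have "\<psi> 0 = F x" unfolding \<psi>_def by simp
  moreover have "\<psi> 1 = F y - c0 - L / 2 * nv ^ 2"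
  proof -
    have "(\<lambda>i. x i + 1 * v i) = y" unfolding v_def by auto
    thus ?thesis unfolding \<psi>_def by simp
  qed
  ultimately show ?thesis unfolding c0_def nv_def v_def by simp
qed

lemma nrm_neg: "nrm d (\<lambda>i. - x i) = nrm d x"
  unfolding nrm_def ip_neg_left ip_neg_right by simp

lemma ip_cs_neg: "- (nrm d x * nrm d y) \<le> ip d x y"
  using ip_cs[of d "\<lambda>i. - x i" y] unfolding ip_neg_left nrm_neg by simp

lemma aux_half: "a \<noteq> 0 \<Longrightarrow> 1 / a * X - a * (1 / a)\<^sup>2 / 2 * X = X / (2 * (a::real))"
  by (simp add: power2_eq_square field_simps)

lemma interp:
  assumes sm: "smooth_on d L F" and sc: "strongly_convex_on d \<mu> F" and mL: "\<mu> \<le> L" and m0: "0 \<le> \<mu>"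
    and x: "x \<in> vsp d" and y: "y \<in> vsp d"
  shows "ip d (\<lambda>i. grad d F x i - grad d F y i - \<mu> * (x i - y i)) (\<lambda>i. grad d F x i - grad d F y i - \<mu> * (x i - y i))
    \<le> 2 * (L - \<mu>) * (F x - F y - ip d (grad d F y) (\<lambda>i. x i - y i) - \<mu> / 2 * ip d (\<lambda>i. x i - y i) (\<lambda>i. x i - y i))"
proof -
  define g where "g = grad d F"
  define D where "D = (\<lambda>i. g x i - g y i - \<mu> * (x i - y i))"
  define e where "e = (\<lambda>i. x i - y i)"
  define P where "P = F x - F y - ip d (g y) e - \<mu> / 2 * ip d e e"
  have G: "\<forall>z\<in>vsp d. has_grad d F (g z) z" unfolding g_def by (rule grad_all[OF sm])
  have gx: "g x \<in> vsp d" and gy: "g y \<in> vsp d" unfolding g_def using grad_vsp[OF sm] x y by auto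
  have Dv: "D \<in> vsp d" unfolding D_def using gx gy x y by (auto simp: vsp_def)
  have L0: "0 \<le> L" using mL m0 by simp
  have key: "t * ip d D D - (L - \<mu>) * t\<^sup>2 / 2 * ip d D D \<le> P" if t: "t > 0" for t
  proof -
    define w where "w = (\<lambda>i. x i - t * D i)"
    have w: "w \<in> vsp d" unfolding w_def using x Dv by (auto simp: vsp_def)
    have 1: "F y + ip d (g y) (\<lambda>i. w i - y i) + \<mu> / 2 * (nrm d (\<lambda>i. w i - y i))\<^sup>2 \<le> F w"
      by (rule sc_grad[OF G sc y w])
    have 2: "F w \<le> F x + ip d (g x) (\<lambda>i. w i - x i) + L / 2 * (nrm d (\<lambda>i. w i - x i))\<^sup>2"
      unfolding g_def by (rule descent[OF sm x w L0])
    have a: "(\<lambda>i. w i - y i) = (\<lambda>i. e i - t * D i)" unfolding w_def e_def by auto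
    have b: "(\<lambda>i. w i - x i) = (\<lambda>i. - (t * D i))" unfolding w_def by auto
    have De: "ip d D D = ip d (g x) D - ip d (g y) D - \<mu> * ip d e D"
      unfolding D_def e_def by (simp add: ip_lin)
    from 1 2 have "F y + ip d (g y) (\<lambda>i. e i - t * D i) + \<mu> / 2 * ip d (\<lambda>i. e i - t * D i) (\<lambda>i. e i - t * D i)
        \<le> F x + ip d (g x) (\<lambda>i. - (t * D i)) + L / 2 * ip d (\<lambda>i. - (t * D i)) (\<lambda>i. - (t * D i))"
      unfolding a b nrm_sq by linarith
    hence "F y + (ip d (g y) e - t * ip d (g y) D) + \<mu> / 2 * (ip d e e - 2 * t * ip d e D + t\<^sup>2 * ip d D D)
        \<le> F x - t * ip d (g x) D + L / 2 * (t\<^sup>2 * ip d D D)"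
      by (simp add: ip_lin ip_comm[of d D e] power2_eq_square algebra_simps)
    thus ?thesis unfolding P_def De by (simp add: power2_eq_square algebra_simps add_divide_distrib diff_divide_distrib)
  qed
  have DD: "0 \<le> ip d D D" by (rule ip_self_nonneg)
  have "ip d D D \<le> 2 * (L - \<mu>) * P"
  proof (cases "L = \<mu>")
    case True
    show ?thesis
    proof (rule ccontr)
      assume "\<not> ?thesis"
      hence pos: "ip d D D > 0" using True by simp
      have "(\<bar>P\<bar> + 1) / ip d D D * ip d D D \<le> P"
        using key[of "(\<bar>P\<bar> + 1) / ip d D D"] pos True by (simp add: divide_pos_pos)
      thus False using pos by simp
    qed
  next
    case False
    hence lm: "L - \<mu> > 0" using mL by simp
    have "1 / (L - \<mu>) * ip d D D - (L - \<mu>) * (1 / (L - \<mu>))\<^sup>2 / 2 * ip d D D \<le> P"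
      using key[of "1 / (L - \<mu>)"] lm by simp
    moreover have "1 / (L - \<mu>) * ip d D D - (L - \<mu>) * (1 / (L - \<mu>))\<^sup>2 / 2 * ip d D D
       = ip d D D / (2 * (L - \<mu>))"
      using aux_half[of "L - \<mu>"] lm by simp
    ultimately have "ip d D D / (2 * (L - \<mu>)) \<le> P" by simp
    thus ?thesis using lm by (simp add: field_simps)
  qed
  thus ?thesis unfolding D_def P_def e_def g_def .
qed

lemma coord_tendsto: "((\<lambda>y::nat\<Rightarrow>real. y i) \<longlongrightarrow> x i) (at x within S)"
proof -
  have "((\<lambda>y::nat\<Rightarrow>real. y i) \<longlongrightarrow> x i) (at x within UNIV)"
    using continuous_on_product_coordinates[of i] unfolding continuous_on_def by blast
  thus ?thesis by (rule tendsto_mono[OF at_le[OF subset_UNIV]])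
qed

lemma cont_F:
  assumes sm: "smooth_on d L F"
  shows "continuous_on (vsp d) F"
  unfolding continuous_on_def
proof
  fix x assume x: "x \<in> vsp d"
  define g where "g = grad d F x"
  have hg: "((\<lambda>y. (F y - F x - ip d g (\<lambda>i. y i - x i)) / nrm d (\<lambda>i. y i - x i)) \<longlongrightarrow> 0) (at x within vsp d)"
    using grad_ex[OF sm x] unfolding has_grad_def g_def by auto
  have lin: "((\<lambda>y. ip d g (\<lambda>i. y i - x i)) \<longlongrightarrow> 0) (at x within vsp d)"
  proof -
    have "((\<lambda>y. \<Sum>i=1..d. g i * (y i - x i)) \<longlongrightarrow> (\<Sum>i=1..d. g i * (x i - x i))) (at x within vsp d)"
      by (intro tendsto_intros coord_tendsto)
    thus ?thesis unfolding ip_def by simp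
  qed
  have nr: "((\<lambda>y. nrm d (\<lambda>i. y i - x i)) \<longlongrightarrow> 0) (at x within vsp d)"
  proof -
    have "((\<lambda>y. sqrt (\<Sum>i=1..d. (y i - x i) * (y i - x i))) \<longlongrightarrow> sqrt (\<Sum>i=1..d. (x i - x i) * (x i - x i))) (at x within vsp d)"
      by (intro tendsto_intros coord_tendsto)
    thus ?thesis unfolding nrm_def ip_def by simp
  qed
  have lim: "((\<lambda>y. F x + ip d g (\<lambda>i. y i - x i) + nrm d (\<lambda>i. y i - x i) * ((F y - F x - ip d g (\<lambda>i. y i - x i)) / nrm d (\<lambda>i. y i - x i)))
      \<longlongrightarrow> F x + 0 + 0 * 0) (at x within vsp d)"
    by (intro tendsto_add tendsto_mult tendsto_const lin nr hg)
  have ev: "\<forall>\<^sub>F y in at x within vsp d. F x + ip d g (\<lambda>i. y i - x i) + nrm d (\<lambda>i. y i - x i) * ((F y - F x - ip d g (\<lambda>i. y i - x i)) / nrm d (\<lambda>i. y i - x i)) = F y"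
    unfolding eventually_at_filter
  proof (rule always_eventually, intro allI impI)
    fix y assume "y \<noteq> x" "y \<in> vsp d"
    have yx: "(\<lambda>i. y i - x i) \<noteq> (\<lambda>i. 0)"
    proof
      assume "(\<lambda>i. y i - x i) = (\<lambda>i. 0)"
      hence "\<forall>i. y i - x i = 0" by (simp add: fun_eq_iff)
      hence "y = x" by (simp add: fun_eq_iff)
      thus False using \<open>y \<noteq> x\<close> by simp
    qed
    have "(\<lambda>i. y i - x i) \<in> vsp d" using x \<open>y \<in> vsp d\<close> by (rule vsp_lin(2)[rotated])
    hence "ip d (\<lambda>i. y i - x i) (\<lambda>i. y i - x i) \<noteq> 0" using ip_zero_iff yx by blast
    hence "nrm d (\<lambda>i. y i - x i) \<noteq> 0" unfolding nrm_def using ip_self_nonneg by simp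
    thus "F x + ip d g (\<lambda>i. y i - x i) + nrm d (\<lambda>i. y i - x i) * ((F y - F x - ip d g (\<lambda>i. y i - x i)) / nrm d (\<lambda>i. y i - x i)) = F y"
      by simp
  qed
  show "(F \<longlongrightarrow> F x) (at x within vsp d)"
    using tendsto_cong[OF ev] lim by simp
qed

lemma coord_le_nrm: "i \<in> {1..d} \<Longrightarrow> \<bar>y i\<bar> \<le> nrm d y"
proof -
  assume i: "i \<in> {1..d}"
  have "y i * y i \<le> (\<Sum>j=1..d. y j * y j)"
    by (rule member_le_sum[OF i]) auto
  hence "sqrt (y i * y i) \<le> sqrt (\<Sum>j=1..d. y j * y j)" by (rule real_sqrt_le_mono)
  moreover have e: "sqrt (y i * y i) = \<bar>y i\<bar>" by (rule real_sqrt_abs2)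
  ultimately show ?thesis unfolding nrm_def ip_def by simp
qed

lemma min_exists:
  assumes sm: "smooth_on d L F" and sc: "strongly_convex_on d \<mu> F" and mu: "\<mu> > 0"
  shows "\<exists>p\<in>vsp d. \<forall>z\<in>vsp d. F p \<le> F z"
proof -
  define z0 where "z0 = (\<lambda>i::nat. 0::real)"
  have z0: "z0 \<in> vsp d" unfolding z0_def vsp_def by simp
  define g0 where "g0 = grad d F z0"
  define R where "R = 2 * nrm d g0 / \<mu> + 1"
  have "0 \<le> 2 * nrm d g0 / \<mu>" using nrm_nonneg[of d g0] mu by simp
  hence R: "R > 0" unfolding R_def by simp
  define S where "S = (\<lambda>i. if i \<in> {1..d} then {-R..R} else {0::real})"
  define K where "K = PiE UNIV S"
  have "compactin (product_topology (\<lambda>i. euclidean) UNIV) K"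
    unfolding K_def compactin_PiE S_def by auto
  hence "compactin euclidean K" by (simp only: euclidean_product_topology)
  hence cK: "compact K" by (simp only: compactin_euclidean_iff)
  have KV: "K \<subseteq> vsp d" unfolding K_def S_def vsp_def by (auto simp: PiE_def Pi_def)
  have z0K: "z0 \<in> K" unfolding K_def S_def z0_def using R by (auto simp: PiE_def Pi_def)
  have Kne: "K \<noteq> {}" using z0K by blast
  have cKF: "continuous_on K F" by (rule continuous_on_subset[OF cont_F[OF sm] KV])
  obtain p where p: "p \<in> K" and pmin: "\<forall>y\<in>K. F p \<le> F y"
    using continuous_attains_inf[OF cK Kne cKF] by blast
  have "\<forall>z\<in>vsp d. F p \<le> F z"
  proof
    fix z assume z: "z \<in> vsp d"
    show "F p \<le> F z"
    proof (cases "z \<in> K")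
      case True thus ?thesis using pmin by blast
    next
      case False
      have "\<exists>i. i \<in> {1..d} \<and> \<bar>z i\<bar> > R"
      proof (rule ccontr)
        assume "\<not> ?thesis"
        hence "\<forall>i\<in>{1..d}. \<bar>z i\<bar> \<le> R" by (simp add: not_less)
        hence A: "\<forall>i\<in>{1..d}. z i \<in> {-R..R}" by (auto simp: abs_le_iff)
        have "\<forall>i. z i \<in> S i"
        proof
          fix i show "z i \<in> S i"
            using A z unfolding S_def vsp_def by (cases "i \<in> {1..d}") auto
        qed
        hence "z \<in> K" unfolding K_def by (simp add: PiE_iff)
        thus False using False by blast
      qed
      then obtain i where i: "i \<in> {1..d}" and zi: "\<bar>z i\<bar> > R" by blast
      have nz: "nrm d z > R" using coord_le_nrm[OF i, of z] zi by simp
      have G: "\<forall>w\<in>vsp d. has_grad d F (grad d F w) w" by (rule grad_all[OF sm])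
      have "F z0 + ip d g0 (\<lambda>i. z i - z0 i) + \<mu> / 2 * (nrm d (\<lambda>i. z i - z0 i))\<^sup>2 \<le> F z"
        unfolding g0_def by (rule sc_grad[OF G sc z0 z])
      moreover have "(\<lambda>i. z i - z0 i) = z" unfolding z0_def by simp
      ultimately have 1: "F z0 + ip d g0 z + \<mu> / 2 * (nrm d z)\<^sup>2 \<le> F z" by simp
      have 2: "- (nrm d g0 * nrm d z) \<le> ip d g0 z" by (rule ip_cs_neg)
      have "nrm d g0 < \<mu> / 2 * nrm d z"
      proof -
        have "\<mu> / 2 * R = nrm d g0 + \<mu> / 2" unfolding R_def using mu by (simp add: field_simps)
        moreover have "\<mu> / 2 * R < \<mu> / 2 * nrm d z" using nz mu by simp
        ultimately show ?thesis using mu by simp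
      qed
      hence "nrm d g0 * nrm d z \<le> \<mu> / 2 * nrm d z * nrm d z"
        using mult_right_mono[OF less_imp_le nrm_nonneg[of d z]] by blast
      hence "nrm d g0 * nrm d z \<le> \<mu> / 2 * (nrm d z)\<^sup>2" by (simp add: power2_eq_square mult.assoc)
      hence "F z0 \<le> F z" using 1 2 by linarith
      moreover have "F p \<le> F z0" using pmin z0K by blast
      ultimately show ?thesis by linarith
    qed
  qed
  thus ?thesis using p KV by blast
qed

lemma descent_step:
  assumes sm: "smooth_on d L F" and L: "L > 0" and z: "z \<in> vsp d"
  shows "F (\<lambda>i. z i - 1 / L * grad d F z i) \<le> F z - ip d (grad d F z) (grad d F z) / (2 * L)"
proof -
  define g where "g = grad d F z"
  have gv: "g \<in> vsp d" unfolding g_def by (rule grad_vsp[OF sm z])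
  have yv: "(\<lambda>i. z i - 1 / L * g i) \<in> vsp d" using z gv unfolding vsp_def by simp
  have D: "F (\<lambda>i. z i - 1 / L * g i) \<le> F z + ip d g (\<lambda>i. (z i - 1 / L * g i) - z i)
      + L / 2 * (nrm d (\<lambda>i. (z i - 1 / L * g i) - z i))\<^sup>2"
    unfolding g_def by (rule descent[OF sm z yv[unfolded g_def]]) (use L in simp)
  have eq: "(\<lambda>i. (z i - 1 / L * g i) - z i) = (\<lambda>i. - (1 / L) * g i)" by auto
  have "F (\<lambda>i. z i - 1 / L * g i) \<le> F z + (- (1 / L)) * ip d g g + L / 2 * ((1 / L)\<^sup>2 * ip d g g)"
    using D unfolding eq ip_scale_right nrm_scale power_mult_distrib power2_abs nrm_sq by simp
  moreover have "F z + (- (1 / L)) * ip d g g + L / 2 * ((1 / L)\<^sup>2 * ip d g g) = F z - ip d g g / (2 * L)"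
    using L by (simp add: power2_eq_square field_simps)
  ultimately show ?thesis unfolding g_def by simp
qed

context
  fixes d :: nat and L \<mu> :: real and F :: "(nat \<Rightarrow> real) \<Rightarrow> real" and p :: "nat \<Rightarrow> real"
  assumes sm: "smooth_on d L F" and sc: "strongly_convex_on d \<mu> F" and mu: "\<mu> > 0" and L: "L > 0"
    and pv: "p \<in> vsp d" and pmin: "\<forall>z\<in>vsp d. F p \<le> F z"
begin

lemma grad_p: "grad d F p = (\<lambda>i. 0)"
proof -
  define g where "g = grad d F p"
  have gv: "g \<in> vsp d" unfolding g_def by (rule grad_vsp[OF sm pv])
  have yv: "(\<lambda>i. p i - 1 / L * g i) \<in> vsp d" using pv gv unfolding vsp_def by simp
  have "F p \<le> F (\<lambda>i. p i - 1 / L * g i)" using pmin yv by blast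
  also have "\<dots> \<le> F p - ip d g g / (2 * L)" unfolding g_def by (rule descent_step[OF sm L pv])
  finally have "ip d g g \<le> 0" using L by (simp add: field_simps)
  hence "ip d g g = 0" using ip_self_nonneg[of d g] by linarith
  thus ?thesis using ip_zero_iff[OF gv] unfolding g_def by blast
qed

lemma sc_p: "z \<in> vsp d \<Longrightarrow> \<mu> / 2 * ip d (\<lambda>i. z i - p i) (\<lambda>i. z i - p i) \<le> F z - F p"
  using sc_grad[OF grad_all[OF sm] sc pv, of z] grad_p by (simp add: nrm_sq)

lemma desc_p: "z \<in> vsp d \<Longrightarrow> F z - F p \<le> L / 2 * ip d (\<lambda>i. z i - p i) (\<lambda>i. z i - p i)"
  using descent[OF sm pv, of z] L grad_p by (simp add: nrm_sq)

lemma mu_le_L: "d \<ge> 1 \<Longrightarrow> \<mu> \<le> L"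
proof -
  assume d: "d \<ge> 1"
  define e where "e = (\<lambda>i. p i + (if i = 1 then 1 else 0::real))"
  have ev: "e \<in> vsp d" using pv d unfolding e_def vsp_def by auto
  have ee: "(\<lambda>i. e i - p i) = (\<lambda>i. if i = 1 then 1 else 0)" unfolding e_def by auto
  have one: "ip d (\<lambda>i. e i - p i) (\<lambda>i. e i - p i) = 1"
    unfolding ee ip_def using d by (simp add: if_distrib sum.delta cong: if_cong)
  show ?thesis using sc_p[OF ev] desc_p[OF ev] unfolding one by simp
qed

lemma pl: "z \<in> vsp d \<Longrightarrow> F z - F p \<le> ip d (grad d F z) (grad d F z) / (2 * \<mu>)"
proof -
  assume z: "z \<in> vsp d"
  define g where "g = grad d F z"
  define v where "v = (\<lambda>i. p i - z i)"
  have 1: "F z + ip d g v + \<mu> / 2 * ip d v v \<le> F p"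
    using sc_grad[OF grad_all[OF sm] sc z pv] unfolding g_def v_def nrm_sq .
  have "0 \<le> ip d (\<lambda>i. g i + \<mu> * v i) (\<lambda>i. g i + \<mu> * v i)" by (rule ip_self_nonneg)
  hence "0 \<le> ip d g g + 2 * \<mu> * ip d g v + \<mu>\<^sup>2 * ip d v v"
    by (simp add: ip_lin ip_comm[of d v g] power2_eq_square algebra_simps)
  hence "- ip d g g / (2 * \<mu>) \<le> ip d g v + \<mu> / 2 * ip d v v"
    using mu by (simp add: power2_eq_square field_simps)
  thus ?thesis using 1 unfolding g_def by (simp add: field_simps)
qed

lemma gd_step: "z \<in> vsp d \<Longrightarrow> F (\<lambda>i. z i - 1 / L * grad d F z i) - F p \<le> (1 - \<mu> / L) * (F z - F p)"
proof -
  assume z: "z \<in> vsp d"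
  define q where "q = ip d (grad d F z) (grad d F z)"
  have 1: "F (\<lambda>i. z i - 1 / L * grad d F z i) \<le> F z - q / (2 * L)"
    unfolding q_def by (rule descent_step[OF sm L z])
  have 2: "2 * \<mu> * (F z - F p) \<le> q" using pl[OF z] mu unfolding q_def by (simp add: field_simps)
  have "(2 * \<mu> * (F z - F p)) / (2 * L) \<le> q / (2 * L)" by (rule divide_right_mono[OF 2]) (use L in simp)
  moreover have "(2 * \<mu> * (F z - F p)) / (2 * L) = \<mu> / L * (F z - F p)" by simp
  ultimately have "q / (2 * L) \<ge> \<mu> / L * (F z - F p)" by simp
  thus ?thesis using 1 by (simp add: algebra_simps)
qed

end

definition Qf :: "nat \<Rightarrow> real \<Rightarrow> real \<Rightarrow> (nat \<Rightarrow> real) \<Rightarrow> (nat \<Rightarrow> real) \<Rightarrow> real \<Rightarrow> real \<Rightarrow> (nat \<Rightarrow> real) \<Rightarrow> (nat \<Rightarrow> real) \<Rightarrow> real" where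
  "Qf d L \<mu> X Y FX FY gX gY = 2 * (L - \<mu>) * (FX - FY - ip d gY (\<lambda>i. X i - Y i))
     - ip d (\<lambda>i. gX i - gY i) (\<lambda>i. gX i - gY i) - \<mu> * L * ip d (\<lambda>i. X i - Y i) (\<lambda>i. X i - Y i)
     + 2 * \<mu> * ip d (\<lambda>i. gX i - gY i) (\<lambda>i. X i - Y i)"

lemma tm_identity:
  fixes A B V W :: "nat \<Rightarrow> real" and F0 F1 L s :: real
  assumes vecs: "Xk = (\<lambda>i. (1 + s) * A i)" "Ym = (\<lambda>i. (1 + s) * B i)"
    "U0 = (\<lambda>i. L * (1 + s) * V i)" "U1 = (\<lambda>i. L * s * (1 + s) * W i)"
    "Yk = (\<lambda>i. (1 - s) * B i + 2 * s * A i - (1 - s) * V i)"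
    "Xn = (\<lambda>i. (1 - s) * Xk i + s * Yk i - (1 + s) * W i)"
  shows "(L * s\<^sup>2 * L * ip d Xn Xn + Qf d L (L * s\<^sup>2) Yk (\<lambda>i. 0) F1 0 U1 (\<lambda>i. 0) / 2)
       - (1 - s)\<^sup>2 * (L * s\<^sup>2 * L * ip d Xk Xk + Qf d L (L * s\<^sup>2) Ym (\<lambda>i. 0) F0 0 U0 (\<lambda>i. 0) / 2)
       + (1 - s)\<^sup>2 / 2 * Qf d L (L * s\<^sup>2) Ym Yk F0 F1 U0 U1
       + (1 - (1 - s)\<^sup>2) / 2 * Qf d L (L * s\<^sup>2) (\<lambda>i. 0) Yk 0 F1 (\<lambda>i. 0) U1 = 0"
  unfolding Qf_def vecs
  apply (simp only: ip_lin ip_zero_left ip_zero_right diff_zero mult_zero_right)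
  apply (simp only: ip_comm[of d B A] ip_comm[of d V A] ip_comm[of d W A] ip_comm[of d V B]
       ip_comm[of d W B] ip_comm[of d W V])
  apply (simp add: field_simps power2_eq_square)
  done

lemma Qf_shift: "Qf d L \<mu> X Y FX FY gX gY = Qf d L \<mu> (\<lambda>i. X i - c i) (\<lambda>i. Y i - c i) (FX - k) (FY - k) gX gY"
proof -
  have "(\<lambda>i. (X i - c i) - (Y i - c i)) = (\<lambda>i. X i - Y i)" by auto
  thus ?thesis unfolding Qf_def by simp
qed

lemma Qf_nonneg:
  assumes sm: "smooth_on d L F" and sc: "strongly_convex_on d \<mu> F" and mL: "\<mu> \<le> L" and m0: "0 \<le> \<mu>"
    and x: "X \<in> vsp d" and y: "Y \<in> vsp d"
  shows "0 \<le> Qf d L \<mu> X Y (F X) (F Y) (grad d F X) (grad d F Y)"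
proof -
  define gx where "gx = grad d F X"
  define gy where "gy = grad d F Y"
  define Dg where "Dg = (\<lambda>i. gx i - gy i)"
  define e where "e = (\<lambda>i. X i - Y i)"
  have I: "ip d (\<lambda>i. Dg i - \<mu> * e i) (\<lambda>i. Dg i - \<mu> * e i)
    \<le> 2 * (L - \<mu>) * (F X - F Y - ip d gy e - \<mu> / 2 * ip d e e)"
    using interp[OF sm sc mL m0 x y] unfolding gx_def gy_def Dg_def e_def by (simp add: algebra_simps)
  have E: "ip d (\<lambda>i. Dg i - \<mu> * e i) (\<lambda>i. Dg i - \<mu> * e i) = ip d Dg Dg - 2 * \<mu> * ip d Dg e + \<mu>\<^sup>2 * ip d e e"
    by (simp add: ip_lin ip_comm[of d e Dg] power2_eq_square algebra_simps)
  have "Qf d L \<mu> X Y (F X) (F Y) gx gy = 2 * (L - \<mu>) * (F X - F Y - ip d gy e) - ip d Dg Dg - \<mu> * L * ip d e e + 2 * \<mu> * ip d Dg e"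
    unfolding Qf_def Dg_def e_def ..
  also have "\<dots> = 2 * (L - \<mu>) * (F X - F Y - ip d gy e - \<mu> / 2 * ip d e e) - ip d (\<lambda>i. Dg i - \<mu> * e i) (\<lambda>i. Dg i - \<mu> * e i)"
    unfolding E by (simp add: power2_eq_square algebra_simps)
  finally show ?thesis using I unfolding gx_def gy_def by simp
qed

lemma init_identity:
  fixes X Vv :: "nat \<Rightarrow> real" and F L s :: real
  assumes U: "U = (\<lambda>i. s * L * Vv i)" and X1: "X1 = (\<lambda>i. X i - Vv i)"
  shows "(1 + s) * ((1 - s)\<^sup>2 * L\<^sup>2 * ip d X X - L * s\<^sup>2 * L * ip d X1 X1 - Qf d L (L * s\<^sup>2) X (\<lambda>i. 0) F 0 U (\<lambda>i. 0) / 2)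
     = Qf d L (L * s\<^sup>2) (\<lambda>i. 0) X 0 F (\<lambda>i. 0) U + (1 - s) / 2 * Qf d L (L * s\<^sup>2) X (\<lambda>i. 0) F 0 U (\<lambda>i. 0)
       + (1 - s) * L\<^sup>2 * ip d (\<lambda>i. s * Vv i - X i) (\<lambda>i. s * Vv i - X i)"
  unfolding Qf_def U X1
  apply (simp only: ip_lin ip_zero_left ip_zero_right diff_zero mult_zero_right)
  apply (simp only: ip_comm[of d Vv X])
  apply (simp add: field_simps power2_eq_square)
  done

lemma D1_scalar:
  fixes w wp u p s L gw gy gz gc :: real
  assumes s: "0 < s" "s \<le> 1" and L: "L > 0"
    and pr: "gw = (1 - s)\<^sup>2 / (1 + s)" "gy = (1 - s)\<^sup>2 / ((2 - s) * (1 + s))"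
      "gz = (1 - s)\<^sup>2 / (s * (2 - s))" "gc = (2 - s) / L"
  shows "(1 + gy) * ((1 + gw) * w - gw * wp - gc * u) - gy * w - p
    = ((1 - s) * ((1 + gy) * w - gy * wp - p) + 2 * s * ((1 + gz) * ((1 + gw) * w - gw * wp - gc * u) - gz * w - p) - (1 - s) / L * u) / (1 + s)"
proof -
  have nz: "1 + s \<noteq> 0" "2 - s \<noteq> 0" "s \<noteq> 0" "L \<noteq> 0" using s L by auto
  show ?thesis unfolding pr using nz by (simp add: divide_simps) (simp add: algebra_simps power2_eq_square)
qed

lemma D2_scalar:
  fixes w wp u p s L gw gy gz gc :: real
  assumes s: "0 < s" "s \<le> 1" and L: "L > 0"
    and pr: "gw = (1 - s)\<^sup>2 / (1 + s)" "gy = (1 - s)\<^sup>2 / ((2 - s) * (1 + s))"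
      "gz = (1 - s)\<^sup>2 / (s * (2 - s))" "gc = (2 - s) / L"
  shows "(1 + gz) * ((1 + gw) * w - gw * wp - gc * u) - gz * w - p
    = (1 - s) * ((1 + gz) * w - gz * wp - p) + s * ((1 + gy) * w - gy * wp - p) - u / (L * s)"
proof -
  have nz: "1 + s \<noteq> 0" "2 - s \<noteq> 0" "s \<noteq> 0" "L \<noteq> 0" using s L by auto
  show ?thesis unfolding pr using nz by (simp add: divide_simps) (simp add: algebra_simps power2_eq_square)
qed

context
  fixes d :: nat and L \<mu> s gc gw gy gz :: real and F :: "(nat \<Rightarrow> real) \<Rightarrow> real" and p z0 :: "nat \<Rightarrow> real"
  assumes sm: "smooth_on d L F" and sc: "strongly_convex_on d \<mu> F" and mu: "\<mu> > 0" and L: "L > 0"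
    and pv: "p \<in> vsp d" and pmin: "\<forall>z\<in>vsp d. F p \<le> F z" and z0: "z0 \<in> vsp d"
    and s: "0 < s" "s \<le> 1" and mus: "\<mu> = L * s\<^sup>2"
    and pc: "gc = (1 + (1 - s)) / L" and pw: "gw = (1 - s)\<^sup>2 / (2 - (1 - s))"
    and py: "gy = (1 - s)\<^sup>2 / ((1 + (1 - s)) * (2 - (1 - s)))" and pz: "gz = (1 - s)\<^sup>2 / (1 - (1 - s)\<^sup>2)"
begin

definition "Wf j = fst (tm_st d F gc gw gy z0 j)"
definition "Wpf j = fst (snd (tm_st d F gc gw gy z0 j))"
definition "Yf j = snd (snd (tm_st d F gc gw gy z0 j))"
definition "Xf j = tm_z d F gc gw gy gz z0 j"

lemma st0: "Wf 0 = z0" "Wpf 0 = z0" "Yf 0 = z0"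
  unfolding Wf_def Wpf_def Yf_def by simp_all

lemma stS: "Wf (Suc j) = (\<lambda>i. (1 + gw) * Wf j i - gw * Wpf j i - gc * grad d F (Yf j) i)"
  "Wpf (Suc j) = Wf j"
  "Yf (Suc j) = (\<lambda>i. (1 + gy) * Wf (Suc j) i - gy * Wf j i)"
proof -
  obtain w wp y where e: "tm_st d F gc gw gy z0 j = (w, wp, y)" by (metis prod_cases3)
  show "Wf (Suc j) = (\<lambda>i. (1 + gw) * Wf j i - gw * Wpf j i - gc * grad d F (Yf j) i)"
    "Wpf (Suc j) = Wf j" "Yf (Suc j) = (\<lambda>i. (1 + gy) * Wf (Suc j) i - gy * Wf j i)"
    unfolding Wf_def Wpf_def Yf_def by (simp_all add: e Let_def)
qed

lemma Xf_eq: "Xf j = (\<lambda>i. (1 + gz) * Wf j i - gz * Wpf j i)"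
proof -
  obtain w wp y where e: "tm_st d F gc gw gy z0 j = (w, wp, y)" by (metis prod_cases3)
  show ?thesis unfolding Xf_def Wf_def Wpf_def tm_z_def by (simp add: e)
qed

lemma Yf_eq: "Yf j = (\<lambda>i. (1 + gy) * Wf j i - gy * Wpf j i)"
proof (cases j)
  case 0 thus ?thesis using st0 by (simp add: algebra_simps)
next
  case (Suc k) thus ?thesis using stS by simp
qed

lemma st_vsp: "Wf j \<in> vsp d \<and> Wpf j \<in> vsp d"
proof (induction j)
  case 0 thus ?case using st0 z0 by simp
next
  case (Suc j)
  have yv: "Yf j \<in> vsp d" using Suc Yf_eq[of j] unfolding vsp_def by simp
  have gv: "grad d F (Yf j) \<in> vsp d" by (rule grad_vsp[OF sm yv])
  show ?case using Suc gv stS(1,2)[of j] unfolding vsp_def by simp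
qed

lemma Yf_vsp: "Yf j \<in> vsp d" using st_vsp[of j] Yf_eq[of j] unfolding vsp_def by simp
lemma Xf_vsp: "Xf j \<in> vsp d" using st_vsp[of j] Xf_eq[of j] unfolding vsp_def by simp

lemma params: "gw = (1 - s)\<^sup>2 / (1 + s)" "gy = (1 - s)\<^sup>2 / ((2 - s) * (1 + s))"
  "gz = (1 - s)\<^sup>2 / (s * (2 - s))" "gc = (2 - s) / L"
proof -
  have "1 - (1 - s)\<^sup>2 = s * (2 - s)" by (simp add: power2_eq_square algebra_simps)
  thus "gw = (1 - s)\<^sup>2 / (1 + s)" "gy = (1 - s)\<^sup>2 / ((2 - s) * (1 + s))"
    "gz = (1 - s)\<^sup>2 / (s * (2 - s))" "gc = (2 - s) / L"
    using pw py pz pc by (simp_all add: mult.commute)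
qed

lemma D1: "Yf (Suc j) i - p i = ((1 - s) * (Yf j i - p i) + 2 * s * (Xf (Suc j) i - p i) - (1 - s) / L * grad d F (Yf j) i) / (1 + s)"
proof -
  have e: "Yf (Suc j) i = (1 + gy) * ((1 + gw) * Wf j i - gw * Wpf j i - gc * grad d F (Yf j) i) - gy * Wf j i"
     "Yf j i = (1 + gy) * Wf j i - gy * Wpf j i"
     "Xf (Suc j) i = (1 + gz) * ((1 + gw) * Wf j i - gw * Wpf j i - gc * grad d F (Yf j) i) - gz * Wf j i"
    using stS[of j] Xf_eq[of "Suc j"] Yf_eq[of j] by simp_all
  show ?thesis unfolding e by (rule D1_scalar[OF s L params])
qed

lemma D2: "Xf (Suc j) i - p i = (1 - s) * (Xf j i - p i) + s * (Yf j i - p i) - grad d F (Yf j) i / (L * s)"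
proof -
  have e: "Xf (Suc j) i = (1 + gz) * ((1 + gw) * Wf j i - gw * Wpf j i - gc * grad d F (Yf j) i) - gz * Wf j i"
     "Yf j i = (1 + gy) * Wf j i - gy * Wpf j i"
     "Xf j i = (1 + gz) * Wf j i - gz * Wpf j i"
    using stS[of j] Xf_eq[of "Suc j"] Xf_eq[of j] Yf_eq[of j] by simp_all
  show ?thesis unfolding e by (rule D2_scalar[OF s L params])
qed

lemma gp: "grad d F p = (\<lambda>i. 0)" by (rule grad_p[OF sm sc mu L pv pmin])

lemma mL: "\<mu> \<le> L"
proof -
  have "s\<^sup>2 \<le> 1" using s by (simp add: power_le_one)
  thus ?thesis using mus L by (simp add: mult_left_le)
qed

lemma Qpos: "X \<in> vsp d \<Longrightarrow> Y \<in> vsp d \<Longrightarrow> 0 \<le> Qf d L \<mu> X Y (F X) (F Y) (grad d F X) (grad d F Y)"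
  by (rule Qf_nonneg[OF sm sc mL less_imp_le[OF mu]])

definition "Vf j = \<mu> * L * ip d (\<lambda>i. Xf (Suc j) i - p i) (\<lambda>i. Xf (Suc j) i - p i)
   + Qf d L \<mu> (Yf j) p (F (Yf j)) (F p) (grad d F (Yf j)) (\<lambda>i. 0) / 2"

lemma shift0: "Qf d L m X p FX (F p) gX gY = Qf d L m (\<lambda>i. X i - p i) (\<lambda>i. 0) (FX - F p) 0 gX gY"
proof -
  have "Qf d L m X p FX (F p) gX gY = Qf d L m (\<lambda>i. X i - p i) (\<lambda>i. p i - p i) (FX - F p) (F p - F p) gX gY"
    by (rule Qf_shift)
  thus ?thesis by simp
qed

lemma shift0': "Qf d L m p X (F p) FX gX gY = Qf d L m (\<lambda>i. 0) (\<lambda>i. X i - p i) 0 (FX - F p) gX gY"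
proof -
  have "Qf d L m p X (F p) FX gX gY = Qf d L m (\<lambda>i. p i - p i) (\<lambda>i. X i - p i) (F p - F p) (FX - F p) gX gY"
    by (rule Qf_shift)
  thus ?thesis by simp
qed

lemma V_step: "Vf (Suc j) \<le> (1 - s)\<^sup>2 * Vf j"
proof -
  define Xk where "Xk = (\<lambda>i. Xf (Suc j) i - p i)"
  define Ym where "Ym = (\<lambda>i. Yf j i - p i)"
  define U0 where "U0 = grad d F (Yf j)"
  define U1 where "U1 = grad d F (Yf (Suc j))"
  define Yk where "Yk = (\<lambda>i. Yf (Suc j) i - p i)"
  define Xn where "Xn = (\<lambda>i. Xf (Suc (Suc j)) i - p i)"
  define F0 where "F0 = F (Yf j) - F p"
  define F1 where "F1 = F (Yf (Suc j)) - F p"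
  define A where "A = (\<lambda>i. Xk i / (1 + s))"
  define B where "B = (\<lambda>i. Ym i / (1 + s))"
  define V where "V = (\<lambda>i. U0 i / (L * (1 + s)))"
  define Wv where "Wv = (\<lambda>i. U1 i / (L * s * (1 + s)))"
  have nz: "1 + s \<noteq> 0" "s \<noteq> 0" "L \<noteq> 0" using s L by auto
  have h1: "Xk = (\<lambda>i. (1 + s) * A i)" unfolding A_def using nz by auto
  have h2: "Ym = (\<lambda>i. (1 + s) * B i)" unfolding B_def using nz by auto
  have h3: "U0 = (\<lambda>i. L * (1 + s) * V i)" unfolding V_def using nz by auto
  have h4: "U1 = (\<lambda>i. L * s * (1 + s) * Wv i)" unfolding Wv_def using nz by auto
  have h5: "Yk = (\<lambda>i. (1 - s) * B i + 2 * s * A i - (1 - s) * V i)"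
  proof
    fix i
    have "Yk i = ((1 - s) * Ym i + 2 * s * Xk i - (1 - s) / L * U0 i) / (1 + s)"
      unfolding Yk_def Ym_def Xk_def U0_def by (rule D1)
    thus "Yk i = (1 - s) * B i + 2 * s * A i - (1 - s) * V i"
      unfolding A_def B_def V_def using nz by (simp add: divide_simps)
  qed
  have h6: "Xn = (\<lambda>i. (1 - s) * Xk i + s * Yk i - (1 + s) * Wv i)"
  proof
    fix i
    have "Xn i = (1 - s) * Xk i + s * Yk i - U1 i / (L * s)"
      unfolding Xn_def Xk_def Yk_def U1_def by (rule D2)
    thus "Xn i = (1 - s) * Xk i + s * Yk i - (1 + s) * Wv i"
      unfolding Wv_def using nz by (simp add: divide_simps)
  qed
  have I: "(L * s\<^sup>2 * L * ip d Xn Xn + Qf d L (L * s\<^sup>2) Yk (\<lambda>i. 0) F1 0 U1 (\<lambda>i. 0) / 2)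
       - (1 - s)\<^sup>2 * (L * s\<^sup>2 * L * ip d Xk Xk + Qf d L (L * s\<^sup>2) Ym (\<lambda>i. 0) F0 0 U0 (\<lambda>i. 0) / 2)
       + (1 - s)\<^sup>2 / 2 * Qf d L (L * s\<^sup>2) Ym Yk F0 F1 U0 U1
       + (1 - (1 - s)\<^sup>2) / 2 * Qf d L (L * s\<^sup>2) (\<lambda>i. 0) Yk 0 F1 (\<lambda>i. 0) U1 = 0"
    by (rule tm_identity[OF h1 h2 h3 h4 h5 h6])
  note I = I[folded mus]
  have e1: "Vf (Suc j) = \<mu> * L * ip d Xn Xn + Qf d L \<mu> Yk (\<lambda>i. 0) F1 0 U1 (\<lambda>i. 0) / 2"
    unfolding Vf_def Xn_def Yk_def F1_def U1_def shift0 ..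
  have e0: "Vf j = \<mu> * L * ip d Xk Xk + Qf d L \<mu> Ym (\<lambda>i. 0) F0 0 U0 (\<lambda>i. 0) / 2"
    unfolding Vf_def Xk_def Ym_def F0_def U0_def shift0 ..
  have q2: "0 \<le> Qf d L \<mu> Ym Yk F0 F1 U0 U1"
  proof -
    have "0 \<le> Qf d L \<mu> (Yf j) (Yf (Suc j)) (F (Yf j)) (F (Yf (Suc j))) U0 U1"
      unfolding U0_def U1_def by (rule Qpos[OF Yf_vsp Yf_vsp])
    thus ?thesis unfolding Qf_shift[of d L \<mu> "Yf j" "Yf (Suc j)" _ _ U0 U1 p "F p"]
      Ym_def Yk_def F0_def F1_def .
  qed
  have q3: "0 \<le> Qf d L \<mu> (\<lambda>i. 0) Yk 0 F1 (\<lambda>i. 0) U1"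
  proof -
    have "0 \<le> Qf d L \<mu> p (Yf (Suc j)) (F p) (F (Yf (Suc j))) (grad d F p) U1"
      unfolding U1_def by (rule Qpos[OF pv Yf_vsp])
    thus ?thesis by (simp only: shift0' gp Yk_def F1_def)
  qed
  have r: "0 \<le> 1 - (1 - s)\<^sup>2" "0 \<le> (1 - s)\<^sup>2"
  proof -
    have "(1 - s)\<^sup>2 \<le> 1" using s by (simp add: power_le_one)
    thus "0 \<le> 1 - (1 - s)\<^sup>2" by simp
  qed simp
  have "0 \<le> (1 - s)\<^sup>2 / 2 * Qf d L \<mu> Ym Yk F0 F1 U0 U1" using q2 r by simp
  moreover have "0 \<le> (1 - (1 - s)\<^sup>2) / 2 * Qf d L \<mu> (\<lambda>i. 0) Yk 0 F1 (\<lambda>i. 0) U1" using q3 r by simp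
  ultimately show ?thesis using I unfolding e1 e0 by linarith
qed

lemma V_init: "Vf 0 \<le> (1 - s)\<^sup>2 * L\<^sup>2 * ip d (\<lambda>i. z0 i - p i) (\<lambda>i. z0 i - p i)"
proof -
  define X where "X = (\<lambda>i. z0 i - p i)"
  define u0 where "u0 = grad d F z0"
  define Vv where "Vv = (\<lambda>i. u0 i / (L * s))"
  define X1 where "X1 = (\<lambda>i. X i - Vv i)"
  define G where "G = F z0 - F p"
  have nz: "s \<noteq> 0" "L \<noteq> 0" using s L by auto
  have hU: "u0 = (\<lambda>i. s * L * Vv i)" unfolding Vv_def using nz by auto
  have x0: "Xf 0 = z0" unfolding Xf_eq st0 by (simp add: algebra_simps)
  have hX1: "(\<lambda>i. Xf (Suc 0) i - p i) = X1"
  proof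
    fix i
    have "Xf (Suc 0) i - p i = (1 - s) * (Xf 0 i - p i) + s * (Yf 0 i - p i) - grad d F (Yf 0) i / (L * s)"
      by (rule D2)
    thus "Xf (Suc 0) i - p i = X1 i" unfolding x0 st0 X1_def X_def Vv_def u0_def by (simp add: algebra_simps)
  qed
  have I: "(1 + s) * ((1 - s)\<^sup>2 * L\<^sup>2 * ip d X X - \<mu> * L * ip d X1 X1 - Qf d L \<mu> X (\<lambda>i. 0) G 0 u0 (\<lambda>i. 0) / 2)
     = Qf d L \<mu> (\<lambda>i. 0) X 0 G (\<lambda>i. 0) u0 + (1 - s) / 2 * Qf d L \<mu> X (\<lambda>i. 0) G 0 u0 (\<lambda>i. 0)
       + (1 - s) * L\<^sup>2 * ip d (\<lambda>i. s * Vv i - X i) (\<lambda>i. s * Vv i - X i)"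
    using init_identity[OF hU X1_def, where d=d and F=G] unfolding mus[symmetric] .
  have qa: "0 \<le> Qf d L \<mu> (\<lambda>i. 0) X 0 G (\<lambda>i. 0) u0"
  proof -
    have "0 \<le> Qf d L \<mu> p z0 (F p) (F z0) (grad d F p) u0" unfolding u0_def by (rule Qpos[OF pv z0])
    thus ?thesis by (simp only: shift0' gp X_def G_def)
  qed
  have qb: "0 \<le> Qf d L \<mu> X (\<lambda>i. 0) G 0 u0 (\<lambda>i. 0)"
  proof -
    have "0 \<le> Qf d L \<mu> z0 p (F z0) (F p) u0 (grad d F p)" unfolding u0_def by (rule Qpos[OF z0 pv])
    thus ?thesis by (simp only: shift0 gp X_def G_def)
  qed
  have "0 \<le> (1 - s) / 2 * Qf d L \<mu> X (\<lambda>i. 0) G 0 u0 (\<lambda>i. 0)" using qb s by simp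
  moreover have "0 \<le> (1 - s) * L\<^sup>2 * ip d (\<lambda>i. s * Vv i - X i) (\<lambda>i. s * Vv i - X i)"
    using s ip_self_nonneg by simp
  ultimately have "0 \<le> (1 + s) * ((1 - s)\<^sup>2 * L\<^sup>2 * ip d X X - \<mu> * L * ip d X1 X1 - Qf d L \<mu> X (\<lambda>i. 0) G 0 u0 (\<lambda>i. 0) / 2)"
    using I qa by linarith
  hence "0 \<le> (1 - s)\<^sup>2 * L\<^sup>2 * ip d X X - \<mu> * L * ip d X1 X1 - Qf d L \<mu> X (\<lambda>i. 0) G 0 u0 (\<lambda>i. 0) / 2"
    using s by (simp add: zero_le_mult_iff)
  moreover have "Vf 0 = \<mu> * L * ip d X1 X1 + Qf d L \<mu> X (\<lambda>i. 0) G 0 u0 (\<lambda>i. 0) / 2"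
    unfolding Vf_def hX1 shift0 st0 X_def G_def u0_def ..
  ultimately show ?thesis unfolding X_def by linarith
qed

lemma V_pow: "Vf k \<le> ((1 - s)\<^sup>2) ^ k * Vf 0"
proof (induction k)
  case 0 thus ?case by simp
next
  case (Suc k)
  have "Vf (Suc k) \<le> (1 - s)\<^sup>2 * Vf k" by (rule V_step)
  also have "\<dots> \<le> (1 - s)\<^sup>2 * (((1 - s)\<^sup>2) ^ k * Vf 0)" by (rule mult_left_mono[OF Suc]) simp
  finally show ?case by (simp add: mult.assoc)
qed

lemma V_lower: "\<mu> * L * ip d (\<lambda>i. Xf (Suc k) i - p i) (\<lambda>i. Xf (Suc k) i - p i) \<le> Vf k"
proof -
  have "0 \<le> Qf d L \<mu> (Yf k) p (F (Yf k)) (F p) (grad d F (Yf k)) (grad d F p)"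
    by (rule Qpos[OF Yf_vsp pv])
  thus ?thesis unfolding Vf_def gp by simp
qed

lemma tm_final: "F (Xf K) - F p \<le> (L / \<mu>)\<^sup>2 * (1 - s) ^ (2 * K) * (F z0 - F p)"
proof -
  have base: "0 \<le> F z0 - F p" using pmin z0 by simp
  have z1: "1 \<le> L / \<mu>" using mL mu by simp
  hence z2: "1 \<le> (L / \<mu>)\<^sup>2" by (simp add: one_le_power)
  show ?thesis
  proof (cases K)
    case 0
    have "Xf 0 = z0" unfolding Xf_eq st0 by (simp add: algebra_simps)
    thus ?thesis using 0 base z2 by (simp add: mult_le_cancel_right1)
  next
    case (Suc k)
    define E where "E = ip d (\<lambda>i. Xf (Suc k) i - p i) (\<lambda>i. Xf (Suc k) i - p i)"
    define E0 where "E0 = ip d (\<lambda>i. z0 i - p i) (\<lambda>i. z0 i - p i)"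
    define r where "r = ((1 - s)\<^sup>2) ^ Suc k"
    have r0: "0 \<le> r" unfolding r_def by simp
    have dp: "F (Xf (Suc k)) - F p \<le> L / 2 * E"
      unfolding E_def by (rule desc_p[OF sm sc mu L pv pmin Xf_vsp])
    have sp: "\<mu> / 2 * E0 \<le> F z0 - F p"
      unfolding E0_def by (rule sc_p[OF sm sc mu L pv pmin z0])
    have "\<mu> * L * E \<le> ((1 - s)\<^sup>2) ^ k * Vf 0" unfolding E_def using V_lower V_pow order_trans by blast
    also have "\<dots> \<le> ((1 - s)\<^sup>2) ^ k * ((1 - s)\<^sup>2 * L\<^sup>2 * E0)"
      unfolding E0_def by (rule mult_left_mono[OF V_init]) simp
    also have "\<dots> = r * L\<^sup>2 * E0" unfolding r_def by (simp add: algebra_simps)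
    finally have 1: "\<mu> * L * E \<le> r * L\<^sup>2 * E0" .
    have "F (Xf K) - F p \<le> L / 2 * E" using dp Suc by simp
    also have "\<dots> = (\<mu> * L * E) / (2 * \<mu>)" using mu by (simp add: field_simps)
    also have "\<dots> \<le> (r * L\<^sup>2 * E0) / (2 * \<mu>)" by (rule divide_right_mono[OF 1]) (use mu in simp)
    also have "\<dots> = r * (L / \<mu>)\<^sup>2 * (\<mu> / 2 * E0)" using mu by (simp add: power2_eq_square field_simps)
    also have "\<dots> \<le> r * (L / \<mu>)\<^sup>2 * (F z0 - F p)" by (rule mult_left_mono[OF sp]) (use r0 in simp)
    also have "\<dots> = (L / \<mu>)\<^sup>2 * (1 - s) ^ (2 * K) * (F z0 - F p)"
    proof -
      have "(1 - s) ^ (2 * K) = r" unfolding r_def Suc by (rule power_mult)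
      thus ?thesis by (simp add: mult.commute mult.left_commute)
    qed
    finally show ?thesis .
  qed
qed

lemma tm_final': "F (tm_z d F gc gw gy gz z0 K) - F p \<le> (L / \<mu>)\<^sup>2 * (1 - s) ^ (2 * K) * (F z0 - F p)"
  using tm_final unfolding Xf_def .

end

lemma tm_vsp:
  assumes sm: "smooth_on d L F" and z0: "z0 \<in> vsp d"
  shows "tm_z d F gc gw gy gz z0 K \<in> vsp d"
proof -
  have "fst (tm_st d F gc gw gy z0 j) \<in> vsp d \<and> fst (snd (tm_st d F gc gw gy z0 j)) \<in> vsp d
      \<and> snd (snd (tm_st d F gc gw gy z0 j)) \<in> vsp d" for j
  proof (induction j)
    case 0 thus ?case using z0 by simp
  next
    case (Suc j)
    obtain w wp y where e: "tm_st d F gc gw gy z0 j = (w, wp, y)" by (metis prod_cases3)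
    have gv: "grad d F y \<in> vsp d" using grad_vsp[OF sm] Suc e by simp
    show ?case using Suc gv e unfolding vsp_def by (simp add: Let_def)
  qed
  note A = this
  obtain w wp y where e: "tm_st d F gc gw gy z0 K = (w, wp, y)" by (metis prod_cases3)
  have "w \<in> vsp d" "wp \<in> vsp d" using A[of K] e by auto
  thus ?thesis unfolding tm_z_def e vsp_def by simp
qed

lemma gd_S: "gd_iter d F \<gamma> z0 (Suc K) = (\<lambda>i. gd_iter d F \<gamma> z0 K i - \<gamma> * grad d F (gd_iter d F \<gamma> z0 K) i)"
  unfolding gd_iter_def by simp

lemma gd_vsp:
  assumes sm: "smooth_on d L F" and z0: "z0 \<in> vsp d"
  shows "gd_iter d F \<gamma> z0 K \<in> vsp d"
proof (induction K)
  case 0 thus ?case using z0 unfolding gd_iter_def by simp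
next
  case (Suc K)
  have "grad d F (gd_iter d F \<gamma> z0 K) \<in> vsp d" by (rule grad_vsp[OF sm Suc])
  thus ?case using Suc unfolding gd_S vsp_def by simp
qed

lemma gd_final:
  assumes sm: "smooth_on d L F" and sc: "strongly_convex_on d \<mu> F" and mu: "\<mu> > 0" and L: "L > 0"
    and pv: "p \<in> vsp d" and pmin: "\<forall>z\<in>vsp d. F p \<le> F z" and z0: "z0 \<in> vsp d" and mL: "\<mu> \<le> L"
  shows "F (gd_iter d F (1 / L) z0 K) - F p \<le> (1 - \<mu> / L) ^ K * (F z0 - F p)"
proof (induction K)
  case 0 thus ?case unfolding gd_iter_def by simp
next
  case (Suc K)
  have c: "0 \<le> 1 - \<mu> / L" using mL L by simp
  have "F (gd_iter d F (1 / L) z0 (Suc K)) - F p \<le> (1 - \<mu> / L) * (F (gd_iter d F (1 / L) z0 K) - F p)"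
    unfolding gd_S by (rule gd_step[OF sm sc mu L pv pmin gd_vsp[OF sm z0]])
  also have "\<dots> \<le> (1 - \<mu> / L) * ((1 - \<mu> / L) ^ K * (F z0 - F p))" by (rule mult_left_mono[OF Suc c])
  finally show ?case by (simp add: mult.assoc)
qed

context
  fixes n m :: nat and k :: "nat \<Rightarrow> nat" and A B :: "nat \<Rightarrow> nat \<Rightarrow> real"
  assumes canon: "canonical_form n m k A B"
begin

lemma cf: "1 \<le> m" "k 0 = 0" "k m = n" "\<And>j. j < m \<Longrightarrow> k j < k (Suc j)"
  "\<And>i l. i \<in> {1..n} \<Longrightarrow> i \<notin> k ` {1..m} \<Longrightarrow> l \<in> {1..n} \<Longrightarrow> A i l = (if l = i + 1 then 1 else 0)"
  "\<And>i j. i \<in> {1..n} \<Longrightarrow> j \<in> {1..m} \<Longrightarrow> B i j = (if i = k j then 1 else 0)"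
  using canon unfolding canonical_form_def by auto

lemma kmono: "j1 < j2 \<Longrightarrow> j2 \<le> m \<Longrightarrow> k j1 < k j2"
proof (induction j2)
  case 0 thus ?case by simp
next
  case (Suc j)
  have kk: "k j < k (Suc j)" using cf(4) Suc.prems by simp
  show ?case
  proof (cases "j1 < j")
    case True thus ?thesis using Suc.IH Suc.prems kk by simp
  next
    case False hence "j1 = j" using Suc.prems by simp
    thus ?thesis using kk by simp
  qed
qed

lemma kmono_le: "j1 \<le> j2 \<Longrightarrow> j2 \<le> m \<Longrightarrow> k j1 \<le> k j2"
  using kmono by (cases "j1 = j2") (auto intro: less_imp_le)

lemma blk_char: "1 \<le> j \<Longrightarrow> j \<le> m \<Longrightarrow> k (j - 1) < i \<Longrightarrow> i \<le> k j \<Longrightarrow> blk k i = j"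
  unfolding blk_def
proof (rule Least_equality)
  assume h: "1 \<le> j" "j \<le> m" "k (j - 1) < i" "i \<le> k j"
  show "i \<le> k j" by fact
  fix y assume y: "i \<le> k y"
  show "j \<le> y"
  proof (rule ccontr)
    assume "\<not> j \<le> y"
    hence "y \<le> j - 1" by simp
    hence "k y \<le> k (j - 1)" using h kmono_le by simp
    thus False using h y by simp
  qed
qed

lemma blk_props: "i \<in> {1..n} \<Longrightarrow> 1 \<le> blk k i \<and> blk k i \<le> m \<and> k (blk k i - 1) < i \<and> i \<le> k (blk k i)"
proof -
  assume i: "i \<in> {1..n}"
  have ex: "i \<le> k m" using i cf(3) by simp
  have 1: "i \<le> k (blk k i)" unfolding blk_def by (rule LeastI[of "\<lambda>j. i \<le> k j", OF ex])
  have 2: "blk k i \<le> m" unfolding blk_def by (rule Least_le[of "\<lambda>j. i \<le> k j" m, OF ex])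
  have 3: "blk k i \<noteq> 0" using 1 i cf(2) by (metis atLeastAtMost_iff not_one_le_zero le_zero_eq)
  have 4: "\<not> i \<le> k (blk k i - 1)"
  proof
    assume "i \<le> k (blk k i - 1)"
    hence "blk k i \<le> blk k i - 1" unfolding blk_def by (rule Least_le)
    thus False using 3 by simp
  qed
  show ?thesis using 1 2 3 4 by simp
qed

lemma blk_kj: "j \<in> {1..m} \<Longrightarrow> blk k (k j) = j"
  by (rule blk_char) (auto intro: kmono)

lemma kj_range: "j \<in> {1..m} \<Longrightarrow> k j \<in> {1..n}"
proof -
  assume j: "j \<in> {1..m}"
  have "k 0 < k j" using j by (intro kmono) auto
  moreover have "k j \<le> k m" using j by (intro kmono_le) auto
  ultimately show ?thesis using cf(2,3) by simp
qed

lemma k_inj: "j1 \<le> m \<Longrightarrow> j2 \<le> m \<Longrightarrow> k j1 = k j2 \<Longrightarrow> j1 = j2"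
  by (metis kmono nat_neq_iff less_irrefl)

lemma nonI_next: "i \<in> {1..n} \<Longrightarrow> i \<notin> k ` {1..m} \<Longrightarrow> i + 1 \<in> {1..n} \<and> blk k (i + 1) = blk k i"
proof -
  assume i: "i \<in> {1..n}" and ni: "i \<notin> k ` {1..m}"
  define j where "j = blk k i"
  have p: "1 \<le> j" "j \<le> m" "k (j - 1) < i" "i \<le> k j" using blk_props[OF i] unfolding j_def by auto
  have "i \<noteq> k j" using ni p by auto
  hence lt: "i < k j" using p by simp
  have "k j \<le> n" using kj_range[of j] p by simp
  hence "i + 1 \<in> {1..n}" using lt by simp
  moreover have "blk k (i + 1) = j" using p lt by (intro blk_char) auto
  ultimately show ?thesis unfolding j_def by simp
qed

lemma xz_nonI: "i \<in> {1..n} \<Longrightarrow> i \<notin> k ` {1..m} \<Longrightarrow> xz n m k Z (Suc t) i = xz n m k Z t (i + 1)"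
proof -
  assume i: "i \<in> {1..n}" and ni: "i \<notin> k ` {1..m}"
  have nx: "i + 1 \<in> {1..n}" "blk k (i + 1) = blk k i" using nonI_next[OF i ni] by auto
  show ?thesis unfolding xz_def using i nx by (simp add: algebra_simps)
qed

lemma xz_I: "j \<in> {1..m} \<Longrightarrow> xz n m k Z t (k j) = zc m Z (int t) j"
  unfolding xz_def using kj_range blk_kj by simp

lemma xz_0: "xz n m k Z 0 = (\<lambda>_. 0)"
proof
  fix i show "xz n m k Z 0 i = 0"
  proof (cases "i \<in> {1..n}")
    case True
    have "i \<le> k (blk k i)" using blk_props[OF True] by simp
    hence "\<not> 1 \<le> int 0 - int (k (blk k i)) + int i" by simp
    thus ?thesis unfolding xz_def zc_def using True by simp
  next
    case False thus ?thesis unfolding xz_def by auto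
  qed
qed

lemma xz_vsp: "xz n m k Z t \<in> vsp n" unfolding xz_def vsp_def by simp
lemma uz_vsp: "uz n m k A Z t \<in> vsp m" unfolding uz_def vsp_def by simp

lemma sumA_nonI: "i \<in> {1..n} \<Longrightarrow> i \<notin> k ` {1..m} \<Longrightarrow> (\<Sum>l=1..n. A i l * v l) = v (i + 1)"
proof -
  assume i: "i \<in> {1..n}" and ni: "i \<notin> k ` {1..m}"
  have "(\<Sum>l=1..n. A i l * v l) = (\<Sum>l=1..n. if l = i + 1 then v l else 0)"
    by (rule sum.cong) (auto simp: cf(5)[OF i ni])
  also have "\<dots> = v (i + 1)" using nonI_next[OF i ni] by (simp add: sum.delta)
  finally show ?thesis .
qed

lemma sumB_nonI: "i \<in> {1..n} \<Longrightarrow> i \<notin> k ` {1..m} \<Longrightarrow> (\<Sum>j=1..m. B i j * w j) = 0"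
  by (rule sum.neutral) (auto simp: cf(6))

lemma sumB_I: "j0 \<in> {1..m} \<Longrightarrow> (\<Sum>j=1..m. B (k j0) j * w j) = w j0"
proof -
  assume j0: "j0 \<in> {1..m}"
  have "(\<Sum>j=1..m. B (k j0) j * w j) = (\<Sum>j=1..m. if j = j0 then w j else 0)"
  proof (rule sum.cong)
    fix j assume j: "j \<in> {1..m}"
    have "(k j0 = k j) = (j = j0)" using k_inj[of j0 j] j j0 by auto
    thus "B (k j0) j * w j = (if j = j0 then w j else 0)" using cf(6)[OF kj_range[OF j0] j] by simp
  qed simp
  also have "\<dots> = w j0" using j0 by (simp add: sum.delta')
  finally show ?thesis .
qed

lemma feasible_z: "feasible n m N A B (xz n m k Z) (uz n m k A Z)"
  unfolding feasible_def
proof (intro conjI allI impI ballI)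
  show "xz n m k Z 0 = (\<lambda>_. 0)" by (rule xz_0)
  fix t show "xz n m k Z t \<in> vsp n" by (rule xz_vsp)
  show "uz n m k A Z t \<in> vsp m" by (rule uz_vsp)
next
  fix t i assume t: "t < N" and i: "i \<in> {1..n}"
  show "xz n m k Z (Suc t) i = (\<Sum>l=1..n. A i l * xz n m k Z t l) + (\<Sum>j=1..m. B i j * uz n m k A Z t j)"
  proof (cases "i \<in> k ` {1..m}")
    case True
    then obtain j0 where j0: "j0 \<in> {1..m}" and ij: "i = k j0" by blast
    have "(\<Sum>j=1..m. B i j * uz n m k A Z t j) = uz n m k A Z t j0" unfolding ij by (rule sumB_I[OF j0])
    also have "\<dots> = zc m Z (int t + 1) j0 - (\<Sum>l=1..n. A (k j0) l * xz n m k Z t l)"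
      unfolding uz_def using j0 by simp
    finally show ?thesis unfolding ij xz_I[OF j0] by (simp add: add.commute)
  next
    case False
    show ?thesis unfolding sumA_nonI[OF i False] sumB_nonI[OF i False] xz_nonI[OF i False] by simp
  qed
qed

definition "encZ N x = (\<lambda>c::nat. if 1 \<le> c \<and> c \<le> m * N then x ((c - 1) div m + 1) (k ((c - 1) mod m + 1)) else (0::real))"

lemma encZ_vsp: "encZ N x \<in> vsp (m * N)" unfolding encZ_def vsp_def by auto

lemma zc_encZ: "1 \<le> t \<Longrightarrow> t \<le> N \<Longrightarrow> j \<in> {1..m} \<Longrightarrow> zc m (encZ N x) (int t) j = x t (k j)"
proof -
  assume t: "1 \<le> t" "t \<le> N" and j: "j \<in> {1..m}"
  define c where "c = (t - 1) * m + j"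
  have c1: "1 \<le> c" using j unfolding c_def by simp
  have "(t - 1) * m + j \<le> (t - 1) * m + m" using j by simp
  also have "\<dots> = t * m" using t by (cases t) auto
  also have "\<dots> \<le> N * m" using t by simp
  finally have c2: "c \<le> m * N" unfolding c_def by (simp add: mult.commute)
  have cm: "c - 1 = (j - 1) + (t - 1) * m" unfolding c_def using j by simp
  have jm: "j - 1 < m" using j by auto
  have d: "(c - 1) div m = t - 1" unfolding cm using jm by simp
  have md: "(c - 1) mod m = j - 1" unfolding cm using jm by simp
  have "zc m (encZ N x) (int t) j = encZ N x c" unfolding zc_def c_def using t by simp
  also have "\<dots> = x t (k j)" unfolding encZ_def using c1 c2 d md t j by simp
  finally show ?thesis .
qed

lemma feas_x:
  assumes fe: "feasible n m N A B x u"
  shows "t \<le> N \<Longrightarrow> xz n m k (encZ N x) t = x t"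
proof -
  let ?Z = "encZ N x"
  have xv: "\<And>t. t \<le> N \<Longrightarrow> x t \<in> vsp n" and x0: "x 0 = (\<lambda>_. 0)"
    and dyn: "\<And>t i. t < N \<Longrightarrow> i \<in> {1..n} \<Longrightarrow> x (Suc t) i = (\<Sum>l=1..n. A i l * x t l) + (\<Sum>j=1..m. B i j * u t j)"
    using fe unfolding feasible_def by auto
  have "t \<le> N \<longrightarrow> (\<forall>i\<in>{1..n}. xz n m k ?Z t i = x t i)"
  proof (induction t)
    case 0 thus ?case using xz_0 x0 by simp
  next
    case (Suc t)
    show ?case
    proof (intro impI ballI)
      assume tN: "Suc t \<le> N"
      fix i assume i: "i \<in> {1..n}"
      show "xz n m k ?Z (Suc t) i = x (Suc t) i"
      proof (cases "i \<in> k ` {1..m}")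
        case True
        then obtain j0 where j0: "j0 \<in> {1..m}" and ij: "i = k j0" by blast
        have "xz n m k ?Z (Suc t) i = zc m ?Z (int (Suc t)) j0" unfolding ij by (rule xz_I[OF j0])
        also have "\<dots> = x (Suc t) (k j0)" by (rule zc_encZ[OF _ tN j0]) simp
        finally show ?thesis unfolding ij .
      next
        case False
        have nx: "i + 1 \<in> {1..n}" using nonI_next[OF i False] by simp
        have "xz n m k ?Z (Suc t) i = xz n m k ?Z t (i + 1)" by (rule xz_nonI[OF i False])
        also have "\<dots> = x t (i + 1)" using Suc.IH tN nx by simp
        also have "\<dots> = x (Suc t) i"
          using dyn[of t i] tN i unfolding sumA_nonI[OF i False] sumB_nonI[OF i False] by simp
        finally show ?thesis .
      qed
    qed
  qed
  thus "t \<le> N \<Longrightarrow> xz n m k ?Z t = x t" using vsp_ext[OF xz_vsp xv] by blast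
qed

lemma feas_u:
  assumes fe: "feasible n m N A B x u"
  shows "t < N \<Longrightarrow> uz n m k A (encZ N x) t = u t"
proof -
  assume t: "t < N"
  let ?Z = "encZ N x"
  have uv: "u t \<in> vsp m" and
    dyn: "\<And>i. i \<in> {1..n} \<Longrightarrow> x (Suc t) i = (\<Sum>l=1..n. A i l * x t l) + (\<Sum>j=1..m. B i j * u t j)"
    using fe t unfolding feasible_def by auto
  have xt: "xz n m k ?Z t = x t" using feas_x[OF fe] t by simp
  show ?thesis
  proof (rule vsp_ext[OF uz_vsp uv])
    fix j assume j: "j \<in> {1..m}"
    have "uz n m k A ?Z t j = zc m ?Z (int t + 1) j - (\<Sum>l=1..n. A (k j) l * x t l)"
      unfolding uz_def xt using j by simp
    also have "zc m ?Z (int t + 1) j = x (Suc t) (k j)"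
    proof -
      have "zc m ?Z (int (Suc t)) j = x (Suc t) (k j)" by (rule zc_encZ) (use t j in auto)
      thus ?thesis by (simp add: add.commute)
    qed
    also have "x (Suc t) (k j) = (\<Sum>l=1..n. A (k j) l * x t l) + u t j"
      using dyn[OF kj_range[OF j]] unfolding sumB_I[OF j] .
    finally show "uz n m k A ?Z t j = u t j" by simp
  qed
qed

lemma J_C: "Jcost N f g (xz n m k Z) (uz n m k A Z) = Ccost n m N k A f g Z"
proof -
  have "(\<Sum>t=0..N. f t (xz n m k Z t)) = (\<Sum>t<Suc N. f t (xz n m k Z t))"
    by (simp add: atLeast0AtMost lessThan_Suc_atMost)
  also have "\<dots> = (\<Sum>t<N. f t (xz n m k Z t)) + f N (xz n m k Z N)" by simp
  finally show ?thesis unfolding Jcost_def Ccost_def by (simp add: sum.distrib)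
qed

lemma Jstar_eq:
  assumes pmin: "\<forall>z\<in>vsp (m * N). Ccost n m N k A f g p \<le> Ccost n m N k A f g z"
  shows "Jstar n m N A B f g = Ccost n m N k A f g p"
  unfolding Jstar_def
proof (rule cInf_eq_minimum)
  show "Ccost n m N k A f g p \<in> {Jcost N f g x u |x u. feasible n m N A B x u}"
    using feasible_z[of N p] J_C[of N f g p, symmetric] by blast
next
  fix y assume "y \<in> {Jcost N f g x u |x u. feasible n m N A B x u}"
  then obtain x u where fe: "feasible n m N A B x u" and y: "y = Jcost N f g x u" by blast
  let ?Z = "encZ N x"
  have "Jcost N f g x u = Jcost N f g (xz n m k ?Z) (uz n m k A ?Z)"
    unfolding Jcost_def using feas_x[OF fe] feas_u[OF fe] by simp
  also have "\<dots> = Ccost n m N k A f g ?Z" by (rule J_C)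
  finally show "Ccost n m N k A f g p \<le> y" using pmin encZ_vsp y by simp
qed

lemma regret_eq:
  assumes pmin: "\<forall>z\<in>vsp (m * N). Ccost n m N k A f g p \<le> Ccost n m N k A f g z"
  shows "regret_z n m N k A B f g Z = Ccost n m N k A f g Z - Ccost n m N k A f g p"
  unfolding regret_z_def J_C Jstar_eq[OF pmin] ..

end

theorem theorem1:
  fixes n m N W :: nat and k :: "nat \<Rightarrow> nat" and A B :: "nat \<Rightarrow> nat \<Rightarrow> real"
    and f g :: "nat \<Rightarrow> (nat \<Rightarrow> real) \<Rightarrow> real"
    and \<mu>f lf lg \<mu>c lc :: real and z0 :: "nat \<Rightarrow> real"
  assumes canon: "canonical_form n m k A B"
    and f_prop: "\<mu>f > 0" "\<forall>t\<le>N. strongly_convex_on n \<mu>f (f t) \<and> smooth_on n lf (f t)"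
    and g_prop: "\<forall>t<N. strongly_convex_on m 0 (g t) \<and> smooth_on m lg (g t)"
    and W: "W \<ge> 1"
    and C_prop: "\<mu>c > 0" "lc > 0"
      "strongly_convex_on (m * N) \<mu>c (Ccost n m N k A f g)"
      "smooth_on (m * N) lc (Ccost n m N k A f g)"
    and z0: "z0 \<in> vsp (m * N)"
  shows "let K = (W - 1) div ctrl_index m k;
             C = Ccost n m N k A f g;
             \<zeta> = lc / \<mu>c;
             \<gamma>g = 1 / lc;
             \<phi> = 1 - 1 / sqrt \<zeta>;
             \<gamma>c = (1 + \<phi>) / lc;
             \<gamma>\<omega> = \<phi>\<^sup>2 / (2 - \<phi>);
             \<gamma>y = \<phi>\<^sup>2 / ((1 + \<phi>) * (2 - \<phi>));
             \<gamma>z = \<phi>\<^sup>2 / (1 - \<phi>\<^sup>2)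
         in regret_z n m N k A B f g (gd_iter (m * N) C \<gamma>g z0 K)
              \<le> \<zeta> * ((\<zeta> - 1) / \<zeta>) ^ K * regret_z n m N k A B f g z0
          \<and> regret_z n m N k A B f g (tm_z (m * N) C \<gamma>c \<gamma>\<omega> \<gamma>y \<gamma>z z0 K)
              \<le> \<zeta>\<^sup>2 * ((sqrt \<zeta> - 1) / sqrt \<zeta>) ^ (2 * K) * regret_z n m N k A B f g z0"
proof -
  define d where "d = m * N"
  define C where "C = Ccost n m N k A f g"
  have sm: "smooth_on d lc C" and sc: "strongly_convex_on d \<mu>c C" and z0v: "z0 \<in> vsp d"
    using C_prop z0 unfolding d_def C_def by auto
  obtain p where pv: "p \<in> vsp d" and pmin: "\<forall>z\<in>vsp d. C p \<le> C z"
    using min_exists[OF sm sc C_prop(1)] by blast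
  have reg: "\<And>Z. regret_z n m N k A B f g Z = C Z - C p"
    using regret_eq[OF canon pmin[unfolded d_def C_def]] unfolding C_def by simp
  define K where "K = (W - 1) div ctrl_index m k"
  define \<zeta> where "\<zeta> = lc / \<mu>c"
  define s where "s = 1 / sqrt \<zeta>"
  define gc where "gc = (1 + (1 - 1 / sqrt \<zeta>)) / lc"
  define gw where "gw = (1 - 1 / sqrt \<zeta>)\<^sup>2 / (2 - (1 - 1 / sqrt \<zeta>))"
  define gy where "gy = (1 - 1 / sqrt \<zeta>)\<^sup>2 / ((1 + (1 - 1 / sqrt \<zeta>)) * (2 - (1 - 1 / sqrt \<zeta>)))"
  define gz where "gz = (1 - 1 / sqrt \<zeta>)\<^sup>2 / (1 - (1 - 1 / sqrt \<zeta>)\<^sup>2)"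
  have base: "0 \<le> C z0 - C p" using pmin z0v by simp
  have goal: "C (gd_iter d C (1 / lc) z0 K) - C p \<le> \<zeta> * ((\<zeta> - 1) / \<zeta>) ^ K * (C z0 - C p)
      \<and> C (tm_z d C gc gw gy gz z0 K) - C p \<le> \<zeta>\<^sup>2 * ((sqrt \<zeta> - 1) / sqrt \<zeta>) ^ (2 * K) * (C z0 - C p)"
  proof (cases "d = 0")
    case True
    have v0: "\<And>x. x \<in> vsp d \<Longrightarrow> x = (\<lambda>i. 0)" using True unfolding vsp_def by auto
    have "gd_iter d C (1 / lc) z0 K = p" using v0[OF gd_vsp[OF sm z0v]] v0[OF pv] by simp
    moreover have "tm_z d C gc gw gy gz z0 K = p" using v0[OF tm_vsp[OF sm z0v]] v0[OF pv] by simp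
    moreover have "z0 = p" using v0[OF z0v] v0[OF pv] by simp
    ultimately show ?thesis by simp
  next
    case False
    have mL: "\<mu>c \<le> lc" by (rule mu_le_L[OF sm sc C_prop(1) C_prop(2) pv pmin]) (use False in simp)
    have z1: "1 \<le> \<zeta>" unfolding \<zeta>_def using mL C_prop by simp
    have zpos: "0 < \<zeta>" using z1 by simp
    have gd: "C (gd_iter d C (1 / lc) z0 K) - C p \<le> (1 - \<mu>c / lc) ^ K * (C z0 - C p)"
      by (rule gd_final[OF sm sc C_prop(1) C_prop(2) pv pmin z0v mL])
    have e1: "(\<zeta> - 1) / \<zeta> = 1 - \<mu>c / lc" unfolding \<zeta>_def using C_prop by (simp add: field_simps)
    have nn: "0 \<le> (1 - \<mu>c / lc) ^ K * (C z0 - C p)" using mL C_prop base by simp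
    have A1: "C (gd_iter d C (1 / lc) z0 K) - C p \<le> \<zeta> * ((\<zeta> - 1) / \<zeta>) ^ K * (C z0 - C p)"
    proof -
      have "(1 - \<mu>c / lc) ^ K * (C z0 - C p) \<le> \<zeta> * ((1 - \<mu>c / lc) ^ K * (C z0 - C p))"
        using z1 nn by (simp add: mult_le_cancel_right1 mult_right_mono[of 1 \<zeta>, simplified])
      thus ?thesis using gd unfolding e1 by (simp add: mult.assoc)
    qed
    have sq: "0 < sqrt \<zeta>" using zpos by simp
    have s0: "0 < s" unfolding s_def using sq by simp
    have s1: "s \<le> 1" unfolding s_def using z1 by simp
    have mus: "\<mu>c = lc * s\<^sup>2"
      unfolding s_def \<zeta>_def using C_prop by (simp add: power_divide real_sqrt_divide field_simps)
    have tm: "C (tm_z d C gc gw gy gz z0 K) - C p \<le> (lc / \<mu>c)\<^sup>2 * (1 - s) ^ (2 * K) * (C z0 - C p)"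
      by (rule tm_final'[OF sm sc C_prop(1) C_prop(2) pv pmin z0v s0 s1 mus])
         (simp_all add: gc_def gw_def gy_def gz_def s_def)
    have e2: "(sqrt \<zeta> - 1) / sqrt \<zeta> = 1 - s" unfolding s_def using sq by (simp add: field_simps)
    have A2: "C (tm_z d C gc gw gy gz z0 K) - C p \<le> \<zeta>\<^sup>2 * ((sqrt \<zeta> - 1) / sqrt \<zeta>) ^ (2 * K) * (C z0 - C p)"
      using tm unfolding e2 by (simp only: \<zeta>_def)
    show ?thesis using A1 A2 by simp
  qed
  show ?thesis
    unfolding Let_def reg
    using goal unfolding K_def \<zeta>_def gc_def gw_def gy_def gz_def d_def C_def by simp
qed

end
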